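(* Assume in addition $\tilde m\le0$. For $y\ge0$, consider $$V(y)=\inf_{Y\in\mathcal A_D(y)}\int_0^\infty\big(\hat\kappa_{\tilde A}(Y_t)+A\xi_tF(\xi_t)\big)\,dt.$$ Let $\tau=\int_0^y\frac{du}{G(\hat\kappa_{\tilde A}(u)/A)}\in[0,\infty]$ and let $Y^*$ be given by $\int_{Y^*_t}^y\frac{du}{G(\hat\kappa_{\tilde A}(u)/A)}=t$ for $t\le\tau$ and $Y^*_t=0$ for $t>\tau$. Then $Y^*$ is the unique optimal element of $\mathcal A_D(y)$, its speed is $\xi^*_t=G\big(\hat\kappa_{\tilde A}(Y^*_t)/A\big)$ for all $t\ge0$, and $$V(y)=\int_0^y\Big\{\frac{\hat\kappa_{\tilde A}(u)}{G\big(\hat\kappa_{\tilde A}(u)/A\big)}+AF\Big(G\Big(\frac{\hat\kappa_{\tilde A}(u)}{A}\Big)\Big)\Big\}\,du,\qquad y\ge0.$$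
   Context: Let $\tilde L$ be a non-trivial one-dimensional Lévy process with canonical decomposition $\tilde L_t=\tilde\mu t+\tilde\sigma\tilde W_t+\int_{|z|\ge1}z\,\tilde N(t,dz)+\int_{|z|<1}z\,(\tilde N(t,dz)-t\tilde\nu(dz))$ ($\tilde W$ standard Brownian motion, $\tilde N$ Poisson random measure independent of $\tilde W$ with compensator $t\tilde\nu(dz)$), where $\tilde\nu$ has a Lebesgue density and $\int_{|z|\ge1}e^{2z}\,\tilde\nu(dz)<\infty$. Let $\tilde m=\tilde\mu+\frac{\tilde\sigma^2}{2}+\int_{\mathbb R}(e^z-1-z\mathbf 1_{\{|z|<1\}})\,\tilde\nu(dz)$, $\tilde s>0$, $\hat L_t=\tilde mt+\tilde\sigma\tilde W_t+\int_{\mathbb R}(e^z-1)\,(\tilde N(t,dz)-t\tilde\nu(dz))$ (a Lévy process with drift $\tilde m$), and $L=\tilde s\hat L$. Let $A>0$, $\tilde A=A\tilde s$, $\hat\kappa(x)=\ln\mathbb E[e^{x\hat L_1}]$ and $\hat\kappa_{\tilde A}(x)=\hat\kappa(-\tilde Ax)$ for $x\ge0$. $\mathcal A_D(y)$ is the set of deterministic absolutely continuous non-increasing functions $Y$ with $Y_0=y$ such that $\int_0^\infty|Y_t|\,dt<\infty$ if $\tilde m\ne0$ and $\int_0^\infty Y_t^2\,dt<\infty$ if $\tilde m=0$; $Y_t=y-\int_0^t\xi_s\,ds$ with $\xi\ge0$. $F:[0,\infty)\to[0,\infty)$ satisfies (i) $F\in C([0,\infty))\cap C^1((0,\infty))$;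 (ii) $F(0)=0$; (iii) $x\mapsto xF(x)$ is strictly convex on $[0,\infty)$; (iv) $x\mapsto x^2F'(x)$ is strictly increasing on $(0,\infty)$ and tends to $\infty$ as $x\to\infty$. $G:[0,\infty)\to[0,\infty)$ is the inverse of $x\mapsto x^2F'(x)$, with $G(0)=0$. *)

theory Defs
  imports "HOL-Analysis.Analysis"
begin

definition strictly_convex_on :: "real set \<Rightarrow> (real \<Rightarrow> real) \<Rightarrow> bool" where
  "strictly_convex_on S f \<longleftrightarrow>
     (\<forall>x\<in>S. \<forall>z\<in>S. x \<noteq> z \<longrightarrow>
        (\<forall>t::real. 0 < t \<and> t < 1 \<longrightarrow> f ((1 - t) * x + t * z) < (1 - t) * f x + t * f z))"

text \<open>Parameters: the characteristic triplet (mu, sig, nu) of the Levy process L-tilde.\<close>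

definition mtilde :: "real \<Rightarrow> real \<Rightarrow> real measure \<Rightarrow> real" where
  "mtilde mu sig nu =
     mu + sig\<^sup>2 / 2 + (\<integral>z. (exp z - 1 - z * indicator {-1<..<1} z) \<partial>nu)"

text \<open>Cumulant function kappa-hat(x) = ln E[exp(x * Lhat_1)], written through the
  Levy-Khintchine formula for Lhat, which has drift mtilde, Gaussian coefficient sig
  and compensated jumps e^z - 1 (z distributed according to nu).\<close>

definition kappahat :: "real \<Rightarrow> real \<Rightarrow> real measure \<Rightarrow> real \<Rightarrow> real" where
  "kappahat mu sig nu x =
     mtilde mu sig nu * x + sig\<^sup>2 * x\<^sup>2 / 2
     + (\<integral>z. (exp (x * (exp z - 1)) - 1 - x * (exp z - 1)) \<partial>nu)"

definition kappaA :: "real \<Rightarrow> real \<Rightarrow> real measure \<Rightarrow> real \<Rightarrow> real \<Rightarrow> real" where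
  "kappaA mu sig nu At u = kappahat mu sig nu (- At * u)"

definition invG :: "(real \<Rightarrow> real) \<Rightarrow> real \<Rightarrow> real" where
  "invG F w = (if w \<le> 0 then 0 else THE x. 0 < x \<and> x\<^sup>2 * deriv F x = w)"

definition traj :: "real \<Rightarrow> (real \<Rightarrow> real) \<Rightarrow> real \<Rightarrow> real" where
  "traj y \<xi> t = y - (LINT s:{0..t}|lborel. \<xi> s)"

text \<open>xi is the speed of an element of A_D(y) (with drift parameter m = mtilde).\<close>

definition admissible :: "real \<Rightarrow> real \<Rightarrow> (real \<Rightarrow> real) \<Rightarrow> bool" where
  "admissible m y \<xi> \<longleftrightarrow>
     (\<forall>t\<ge>0. 0 \<le> \<xi> t) \<and>
     (\<forall>t\<ge>0. set_integrable lborel {0..t} \<xi>) \<and>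
     (if m \<noteq> 0 then set_integrable lborel {0..} (\<lambda>t. \<bar>traj y \<xi> t\<bar>)
      else set_integrable lborel {0..} (\<lambda>t. (traj y \<xi> t)\<^sup>2))"

definition cost :: "(real \<Rightarrow> real) \<Rightarrow> real \<Rightarrow> (real \<Rightarrow> real) \<Rightarrow> real \<Rightarrow> (real \<Rightarrow> real) \<Rightarrow> ennreal" where
  "cost K A F y \<xi> =
     (\<integral>\<^sup>+ t\<in>{0..}. ennreal (K (traj y \<xi> t) + A * \<xi> t * F (\<xi> t)) \<partial>lborel)"

definition valueV :: "real \<Rightarrow> (real \<Rightarrow> real) \<Rightarrow> real \<Rightarrow> (real \<Rightarrow> real) \<Rightarrow> real \<Rightarrow> ennreal" where
  "valueV m K A F y = (INF \<xi> \<in> {\<xi>. admissible m y \<xi>}. cost K A F y \<xi>)"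

definition Phi :: "(real \<Rightarrow> real) \<Rightarrow> real \<Rightarrow> (real \<Rightarrow> real) \<Rightarrow> real \<Rightarrow> real \<Rightarrow> ennreal" where
  "Phi K A F y z = (\<integral>\<^sup>+ u\<in>{z..y}. ennreal (1 / invG F (K u / A)) \<partial>lborel)"

definition tau :: "(real \<Rightarrow> real) \<Rightarrow> real \<Rightarrow> (real \<Rightarrow> real) \<Rightarrow> real \<Rightarrow> ennreal" where
  "tau K A F y = Phi K A F y 0"

definition Ystar :: "(real \<Rightarrow> real) \<Rightarrow> real \<Rightarrow> (real \<Rightarrow> real) \<Rightarrow> real \<Rightarrow> real \<Rightarrow> real" where
  "Ystar K A F y t =
     (if ennreal t \<le> tau K A F y
      then (THE z. 0 \<le> z \<and> z \<le> y \<and> Phi K A F y z = ennreal t)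
      else 0)"

end

theory Submission
  imports Defs "HOL-Probability.Probability"
begin


lemma Xenn:
  fixes g :: "real \<Rightarrow> real"
  assumes g_nn: "\<And>r. 0 \<le> g r" and g_int: "integrable lborel g"
  shows "ennreal (LINT r:{0..v}|lborel. g r) = (\<integral>\<^sup>+r. ennreal (g r) * indicator {0..v} r \<partial>lborel)"
proof -
  have "integrable lborel (\<lambda>r. indicator {0..v} r *\<^sub>R g r)"
    using g_int by (intro integrable_mult_indicator) auto
  then have "(\<integral>\<^sup>+r. ennreal (indicator {0..v} r *\<^sub>R g r) \<partial>lborel) = ennreal (\<integral>r. indicator {0..v} r *\<^sub>R g r \<partial>lborel)"
    using g_nn by (intro nn_integral_eq_integral) (auto simp: indicator_def)
  moreover have "\<And>r. ennreal (indicator {0..v} r *\<^sub>R g r) = ennreal (g r) * indicator {0..v} r"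
    by (auto simp: indicator_def)
  ultimately show ?thesis by (simp add: set_lebesgue_integral_def)
qed

lemma cv_core:
  fixes g :: "real \<Rightarrow> real" and f :: "real \<Rightarrow> ennreal"
  assumes g_nn: "\<And>r. 0 \<le> g r" and g_int: "integrable lborel g"
    and g_supp: "\<And>r. r \<notin> {0..T} \<Longrightarrow> g r = 0" and T: "0 \<le> T"
    and f: "f \<in> borel_measurable borel"
  shows "(\<integral>\<^sup>+r. ennreal (g r) * f (LINT r:{0..r}|lborel. g r) \<partial>lborel)
       = (\<integral>\<^sup>+s. indicator {0..(LINT r:{0..T}|lborel. g r)} s * f s \<partial>lborel)"
proof -
  have g_meas: "g \<in> borel_measurable borel"
    using borel_measurable_integrable[OF g_int] by simp
  define X where "X v = (LINT r:{0..v}|lborel. g r)" for v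
  have Xe: "ennreal (X v) = (\<integral>\<^sup>+r. ennreal (g r) * indicator {0..v} r \<partial>lborel)" for v
    unfolding X_def by (rule Xenn[OF g_nn g_int])
  have X_nn: "0 \<le> X v" for v
    unfolding X_def set_lebesgue_integral_def by (intro integral_nonneg_AE) (auto simp: g_nn)
  have X0: "X 0 = 0"
  proof -
    have "ennreal (X 0) = (\<integral>\<^sup>+r. ennreal (g 0) * indicator {0::real} r \<partial>lborel)"
      unfolding Xe by (intro nn_integral_cong) (auto simp: indicator_def)
    also have "\<dots> = 0" by (simp add: nn_integral_cmult_indicator)
    finally show ?thesis using X_nn[of 0] by simp
  qed
  have X_mono: "X v \<le> X w" if "v \<le> w" for v w
  proof -
    have "ennreal (X v) \<le> ennreal (X w)" unfolding Xe
      using that by (intro nn_integral_mono) (auto simp: indicator_def)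
    then show ?thesis using X_nn by (simp add: ennreal_le_iff X_nn)
  qed
  have X_cont: "continuous_on UNIV X"
    unfolding X_def by (rule continuous_on_LBINT) (use integrable_mult_indicator[OF _ g_int] in \<open>auto simp: set_integrable_def\<close>)
  have X_meas: "X \<in> borel_measurable borel"
    using X_cont by (intro borel_measurable_continuous_onI) auto
  have XT: "X v = X T" if "T \<le> v" for v
  proof -
    have "ennreal (X v) = ennreal (X T)" unfolding Xe
      using that g_supp by (intro nn_integral_cong) (auto simp: indicator_def)
    then show ?thesis using X_nn by simp
  qed
  define M1 where "M1 = distr (density lborel (\<lambda>r. ennreal (g r))) borel X"
  define M2 where "M2 = density lborel (indicator {0..X T} :: real \<Rightarrow> ennreal)"
  have tot: "(\<integral>\<^sup>+r. ennreal (g r) \<partial>lborel) = ennreal (X T)"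
    unfolding Xe using g_supp by (intro nn_integral_cong) (auto simp: indicator_def)
  have M1_sets: "sets M1 = sets borel" unfolding M1_def by simp
  have M2_sets: "sets M2 = sets borel" unfolding M2_def by simp
  have e1: "emeasure M1 A = (\<integral>\<^sup>+r. ennreal (g r) * indicator (X -` A) r \<partial>lborel)" if "A \<in> sets borel" for A
  proof -
    have "X -` A \<in> sets lborel" using measurable_sets_borel[OF X_meas that] by simp
    then show ?thesis unfolding M1_def using that X_meas
      apply (subst emeasure_distr)
        apply (auto simp: mult.commute)
      apply (subst emeasure_density)
        apply (auto)
      using g_meas by measurable
  qed
  have e2: "emeasure M2 A = (\<integral>\<^sup>+s. indicator {0..X T} s * indicator A s \<partial>lborel)" if "A \<in> sets borel" for A
    unfolding M2_def using that by (subst emeasure_density) (auto simp: mult.commute)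
  have fin1: "emeasure M1 UNIV \<noteq> \<infinity>"
    using e1[of UNIV] tot by simp
  have fin2: "emeasure M2 UNIV \<noteq> \<infinity>"
    using e2[of UNIV] X_nn[of T] by simp
  have cdf_eq: "emeasure M1 {..x} = emeasure M2 {..x}" for x
  proof -
    have r2: "emeasure M2 {..x} = ennreal (min (max x 0) (X T))"
    proof -
      have "emeasure M2 {..x} = emeasure lborel ({0..X T} \<inter> {..x})"
      proof -
        have "emeasure M2 {..x} = (\<integral>\<^sup>+s. indicator ({0..X T} \<inter> {..x}) s \<partial>lborel)"
          unfolding e2[OF atMost_borel] by (intro nn_integral_cong) (auto simp: indicator_def)
        then show ?thesis by simp
      qed
      also have "{0..X T} \<inter> {..x} = {0..min x (X T)}" by auto
      finally show ?thesis using X_nn[of T] by (cases "x < 0") (auto simp: min_def max_def)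
    qed
    consider "x < 0" | "X T \<le> x" | "0 \<le> x" "x < X T" by linarith
    then show ?thesis
    proof cases
      case 1
      have "emeasure M1 {..x} = (\<integral>\<^sup>+(r::real). 0 \<partial>lborel)"
        unfolding e1[OF atMost_borel]
        by (intro nn_integral_cong) (use X_nn 1 in \<open>auto simp: indicator_def, meson not_le order_less_le_trans\<close>)
      then show ?thesis using r2 1 X_nn[of T] by (simp add: min_def)
    next
      case 2
      have "emeasure M1 {..x} = (\<integral>\<^sup>+r. ennreal (g r) \<partial>lborel)"
        unfolding e1[OF atMost_borel]
      proof (intro nn_integral_cong)
        fix q
        show "ennreal (g q) * indicator (X -` {..x}) q = ennreal (g q)"
        proof (cases "q \<in> {0..T}")
          case True
          then have "X q \<le> x" using X_mono[of q T] 2 by auto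
          then show ?thesis by (auto simp: indicator_def)
        qed (use g_supp in auto)
      qed
      then show ?thesis using r2 2 tot X_nn[of T] by (simp add: min_def max_def)
    next
      case 3
      define S where "S = {0..T} \<inter> X -` {..x}"
      have "closed (X -` {..x})"
        using X_cont by (intro continuous_closed_vimage) (auto simp: continuous_on_eq_continuous_at)
      then have "compact S" unfolding S_def by (intro compact_Int_closed) auto
      moreover have "0 \<in> S" unfolding S_def using T 3 X0
        by auto
      ultimately obtain s where s: "s \<in> S" "\<And>r. r \<in> S \<Longrightarrow> r \<le> s"
        using continuous_attains_sup[of S "\<lambda>r. r"] by auto
      have "\<exists>r\<ge>s. r \<le> T \<and> X r = x"
        using s(1) 3 unfolding S_def
        by (intro IVT') (auto intro: continuous_on_subset[OF X_cont])
      then obtain r where r: "s \<le> r" "r \<le> T" "X r = x" by auto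
      then have "r \<in> S" using s(1) unfolding S_def by auto
      then have "r = s" using s(2) r by force
      then have Xs: "X s = x" using r by simp
      have "emeasure M1 {..x} = (\<integral>\<^sup>+r. ennreal (g r) * indicator {0..s} r \<partial>lborel)"
        unfolding e1[OF atMost_borel]
      proof (intro nn_integral_cong)
        fix q
        show "ennreal (g q) * indicator (X -` {..x}) q = ennreal (g q) * indicator {0..s} q"
        proof (cases "q \<in> {0..T}")
          case True
          then have "X q \<le> x \<longleftrightarrow> q \<le> s"
            using s(2)[of q] X_mono[of q s] Xs unfolding S_def by auto
          then show ?thesis using True by (auto simp: indicator_def)
        qed (use g_supp in auto)
      qed
      also have "\<dots> = ennreal x" using Xe[of s] Xs by simp
      finally show ?thesis using r2 3 by (simp add: min_def max_def)
    qed
  qed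
  have "M1 = M2"
  proof (rule cdf_unique')
    show "finite_borel_measure M1"
    proof (rule finite_borel_measure.intro)
      have "space M1 = UNIV" using sets_eq_imp_space_eq[OF M1_sets] by simp
      then show "finite_measure M1" using fin1 by (intro finite_measureI) (simp add: top_unique)
    qed (simp add: M1_sets finite_borel_measure_axioms_def)
    show "finite_borel_measure M2"
    proof (rule finite_borel_measure.intro)
      have "space M2 = UNIV" using sets_eq_imp_space_eq[OF M2_sets] by simp
      then show "finite_measure M2" using fin2 by (intro finite_measureI) (simp add: top_unique)
    qed (simp add: M2_sets finite_borel_measure_axioms_def)
    show "cdf M1 = cdf M2"
      unfolding cdf_def using cdf_eq by (auto simp: measure_def)
  qed
  then have "(\<integral>\<^sup>+s. f s \<partial>M1) = (\<integral>\<^sup>+s. f s \<partial>M2)" by simp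
  moreover have "(\<integral>\<^sup>+s. f s \<partial>M1) = (\<integral>\<^sup>+r. ennreal (g r) * f (X r) \<partial>lborel)"
    unfolding M1_def using X_meas f
    apply (subst nn_integral_distr)
      apply simp_all
    apply (subst nn_integral_density)
    using g_meas X_meas f by (auto intro: measurable_compose)
  moreover have "(\<integral>\<^sup>+s. f s \<partial>M2) = (\<integral>\<^sup>+s. indicator {0..X T} s * f s \<partial>lborel)"
    unfolding M2_def using f by (subst nn_integral_density) auto
  ultimately show ?thesis unfolding X_def by simp
qed
lemma cv_traj:
  fixes \<eta> :: "real \<Rightarrow> real" and f :: "real \<Rightarrow> ennreal"
  assumes T: "0 \<le> T" and nn: "\<And>r. r \<in> {0..T} \<Longrightarrow> 0 \<le> \<eta> r"
    and int: "set_integrable lborel {0..T} \<eta>" and f[measurable]: "f \<in> borel_measurable borel"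
  shows "(\<integral>\<^sup>+r\<in>{0..T}. ennreal (\<eta> r) * f (traj y \<eta> r) \<partial>lborel)
       = (\<integral>\<^sup>+u\<in>{traj y \<eta> T..y}. f u \<partial>lborel)"
proof -
  define g where "g r = \<eta> r * indicator {0..T} r" for r
  have g_nn: "0 \<le> g r" for r using nn by (auto simp: g_def indicator_def)
  have g_int: "integrable lborel g" using int unfolding set_integrable_def g_def
    by (simp add: mult.commute)
  have g_supp: "g r = 0" if "r \<notin> {0..T}" for r using that by (simp add: g_def)
  define X where "X v = (LINT r:{0..v}|lborel. g r)" for v
  have Xeq: "X r = (LINT r:{0..r}|lborel. \<eta> r)" if "r \<le> T" for r
    unfolding X_def using that by (intro set_lebesgue_integral_cong) (auto simp: g_def)
  have fm: "(\<lambda>s. f (y - s)) \<in> borel_measurable borel" by measurable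
  have "(\<integral>\<^sup>+r. ennreal (g r) * f (y - X r) \<partial>lborel)
       = (\<integral>\<^sup>+s. indicator {0..X T} s * f (y - s) \<partial>lborel)"
    unfolding X_def by (rule cv_core[OF g_nn g_int g_supp T fm])
  also have "\<dots> = (\<integral>\<^sup>+u. indicator {y - X T..y} u * f u \<partial>lborel)"
    by (subst nn_integral_real_affine[where c="-1" and t=y]) (auto simp: indicator_def intro!: nn_integral_cong)
  finally have *: "(\<integral>\<^sup>+r. ennreal (g r) * f (y - X r) \<partial>lborel) = (\<integral>\<^sup>+u. indicator {y - X T..y} u * f u \<partial>lborel)" .
  have "(\<integral>\<^sup>+r\<in>{0..T}. ennreal (\<eta> r) * f (traj y \<eta> r) \<partial>lborel) = (\<integral>\<^sup>+r. ennreal (g r) * f (y - X r) \<partial>lborel)"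
    by (intro nn_integral_cong) (auto simp: g_def indicator_def traj_def Xeq)
  also note *
  also have "y - X T = traj y \<eta> T" using Xeq[of T] by (simp add: traj_def)
  finally show ?thesis by (simp add: mult.commute)
qed

lemma lint_nn_mono:
  fixes \<eta> :: "real \<Rightarrow> real"
  assumes nn: "\<And>r. r \<in> {0..t} \<Longrightarrow> 0 \<le> \<eta> r" and int: "set_integrable lborel {0..t} \<eta>"
    and st: "s \<le> t"
  shows "0 \<le> (LINT r:{0..s}|lborel. \<eta> r)" "(LINT r:{0..s}|lborel. \<eta> r) \<le> (LINT r:{0..t}|lborel. \<eta> r)"
proof -
  define g where "g r = \<eta> r * indicator {0..t} r" for r
  have g_nn: "0 \<le> g r" for r using nn by (auto simp: g_def indicator_def)
  have g_int: "integrable lborel g" using int unfolding set_integrable_def g_def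
    by (simp add: mult.commute)
  have eq: "(LINT r:{0..v}|lborel. \<eta> r) = (LINT r:{0..v}|lborel. g r)" if "v \<le> t" for v
    using that by (intro set_lebesgue_integral_cong) (auto simp: g_def)
  have "ennreal (LINT r:{0..s}|lborel. g r) \<le> ennreal (LINT r:{0..t}|lborel. g r)"
    unfolding Xenn[OF g_nn g_int] using st by (intro nn_integral_mono) (auto simp: indicator_def)
  moreover have "0 \<le> (LINT r:{0..v}|lborel. g r)" for v
    unfolding set_lebesgue_integral_def by (intro integral_nonneg_AE) (auto simp: g_nn)
  ultimately show "0 \<le> (LINT r:{0..s}|lborel. \<eta> r)" "(LINT r:{0..s}|lborel. \<eta> r) \<le> (LINT r:{0..t}|lborel. \<eta> r)"
    using eq[OF st] eq[of t] by auto
qed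

lemma traj_mono:
  assumes nn: "\<And>r. r \<in> {0..t} \<Longrightarrow> 0 \<le> \<eta> r" and int: "set_integrable lborel {0..t} \<eta>"
    and st: "s \<le> t"
  shows "traj y \<eta> t \<le> traj y \<eta> s" "traj y \<eta> s \<le> y"
  using lint_nn_mono[OF nn int st] by (auto simp: traj_def)

lemma lborel_Ici_infinite: "(\<integral>\<^sup>+t. ennreal c * indicator {T0..} t \<partial>lborel) = \<infinity>" if "0 < c" for c T0 :: real
proof (rule ccontr)
  assume "\<not> ?thesis"
  then obtain r where r: "(\<integral>\<^sup>+t. ennreal c * indicator {T0..} t \<partial>lborel) = ennreal r" "0 \<le> r"
    using ennreal_cases[of "(\<integral>\<^sup>+t. ennreal c * indicator {T0..} t \<partial>lborel)"] by auto
  define n :: real where "n = r / c + 1"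
  have n: "0 \<le> n" using r that by (simp add: n_def)
  have "ennreal (c * n) = (\<integral>\<^sup>+t. ennreal c * indicator {T0..T0+n} t \<partial>lborel)"
    using n that by (simp add: nn_integral_cmult_indicator ennreal_mult)
  also have "\<dots> \<le> ennreal r" unfolding r(1)[symmetric]
    by (intro nn_integral_mono) (auto simp: indicator_def)
  finally have "c * n \<le> r" using r(2) by (simp add: ennreal_le_iff)
  then show False using that mult_pos_pos[OF that that] by (simp add: n_def field_simps)
qed

lemma tail_not_integrable:
  fixes f :: "real \<Rightarrow> real"
  assumes int: "set_integrable lborel {0..} f" and eps: "0 < \<epsilon>" and T0: "0 \<le> T0"
    and big: "\<And>t. T0 \<le> t \<Longrightarrow> \<epsilon> \<le> \<bar>f t\<bar>"
  shows False
proof -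
  have "integrable lborel (\<lambda>t. indicator {0..} t *\<^sub>R f t)" using int by (simp add: set_integrable_def)
  then have fin: "(\<integral>\<^sup>+t. ennreal (norm (indicator {0..} t *\<^sub>R f t)) \<partial>lborel) < \<infinity>"
    by (simp add: integrable_iff_bounded)
  have "(\<integral>\<^sup>+t. ennreal \<epsilon> * indicator {T0..} t \<partial>lborel) \<le> (\<integral>\<^sup>+t. ennreal (norm (indicator {0..} t *\<^sub>R f t)) \<partial>lborel)"
    using big T0 by (intro nn_integral_mono) (auto simp: indicator_def)
  then show False using fin lborel_Ici_infinite[OF eps, of T0] by simp
qed

lemma adm_facts:
  assumes adm: "admissible m y \<eta>"
  shows "\<And>T. 0 \<le> T \<Longrightarrow> 0 \<le> traj y \<eta> T" "\<And>\<delta>. 0 < \<delta> \<Longrightarrow> \<exists>T\<ge>0. traj y \<eta> T < \<delta>"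
    "\<And>s t. 0 \<le> s \<Longrightarrow> s \<le> t \<Longrightarrow> traj y \<eta> t \<le> traj y \<eta> s"
proof -
  have nn: "\<And>t. 0 \<le> t \<Longrightarrow> 0 \<le> \<eta> t" and int: "\<And>t. 0 \<le> t \<Longrightarrow> set_integrable lborel {0..t} \<eta>"
    using adm by (auto simp: admissible_def)
  show mono: "traj y \<eta> t \<le> traj y \<eta> s" if "0 \<le> s" "s \<le> t" for s t
    using traj_mono(1)[of t \<eta> s y] nn int that by auto
  have key: False if eps: "0 < \<epsilon>" and T0: "0 \<le> T0" and big: "\<And>t. T0 \<le> t \<Longrightarrow> \<epsilon> \<le> \<bar>traj y \<eta> t\<bar>" for \<epsilon> T0
  proof (cases "m \<noteq> 0")
    case True
    then have "set_integrable lborel {0..} (\<lambda>t. \<bar>traj y \<eta> t\<bar>)" using adm by (simp add: admissible_def)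
    then show False by (rule tail_not_integrable[OF _ eps T0]) (use big in auto)
  next
    case False
    then have "set_integrable lborel {0..} (\<lambda>t. (traj y \<eta> t)\<^sup>2)" using adm by (simp add: admissible_def)
    then show False
    proof (rule tail_not_integrable[OF _ _ T0])
      show "0 < \<epsilon>\<^sup>2" using eps by simp
      fix t assume "T0 \<le> t"
      then have "\<epsilon> \<le> \<bar>traj y \<eta> t\<bar>" by (rule big)
      then have "\<epsilon>\<^sup>2 \<le> \<bar>traj y \<eta> t\<bar>\<^sup>2" using eps by (intro power_mono) auto
      then show "\<epsilon>\<^sup>2 \<le> \<bar>(traj y \<eta> t)\<^sup>2\<bar>" by simp
    qed
  qed
  show "0 \<le> traj y \<eta> T" if "0 \<le> T" for T
  proof (rule ccontr)
    assume "\<not> ?thesis"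
    show False
    proof (rule key[of "- traj y \<eta> T" T])
      fix t assume "T \<le> t"
      then have "traj y \<eta> t \<le> traj y \<eta> T" using mono[of T t] that by auto
      then show "- traj y \<eta> T \<le> \<bar>traj y \<eta> t\<bar>" using \<open>\<not> 0 \<le> traj y \<eta> T\<close> by linarith
    qed (use that \<open>\<not> 0 \<le> traj y \<eta> T\<close> in auto)
  qed
  show "\<exists>T\<ge>0. traj y \<eta> T < \<delta>" if "0 < \<delta>" for \<delta>
  proof (rule ccontr)
    assume "\<not> ?thesis"
    then show False
      by (intro key[of \<delta> 0]) (use that in \<open>auto simp: not_less\<close>)
  qed
qed


lemma antimono_measurable:
  fixes g :: "real \<Rightarrow> real"
  assumes "\<And>a b. a \<le> b \<Longrightarrow> g b \<le> g a"
  shows "g \<in> borel_measurable borel"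
proof -
  have "(\<lambda>r. - g r) \<in> borel_measurable borel"
    by (rule borel_measurable_mono) (auto simp: mono_def intro: assms)
  then have "(\<lambda>r. - (- g r)) \<in> borel_measurable borel" by measurable
  then show ?thesis by simp
qed

lemma set_integrable_meas:
  fixes \<eta> :: "real \<Rightarrow> real"
  assumes "set_integrable lborel S \<eta>"
  shows "(\<lambda>r. \<eta> r * indicator S r) \<in> borel_measurable borel"
proof -
  have "(\<lambda>r. indicator S r *\<^sub>R \<eta> r) \<in> borel_measurable lborel"
    using assms unfolding set_integrable_def by (rule borel_measurable_integrable)
  then show ?thesis by (simp add: mult.commute)
qed

lemma SUP_indicator_nat:
  fixes a :: ennreal
  shows "(SUP n::nat. a * indicator {0..real n} r) = a * indicator {0..} r"
proof (cases "0 \<le> r")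
  case True
  obtain n :: nat where "r \<le> real n" using real_arch_simple by blast
  then have "a * indicator {0..} r \<le> (SUP n::nat. a * indicator {0..real n} r)"
    using True by (intro SUP_upper2[of n]) (auto simp: indicator_def)
  moreover have "(SUP n::nat. a * indicator {0..real n} r) \<le> a * indicator {0..} r"
    by (intro SUP_least) (auto simp: indicator_def)
  ultimately show ?thesis by (rule antisym[rotated])
qed simp

lemma cv_infty:
  fixes \<eta> :: "real \<Rightarrow> real" and f :: "real \<Rightarrow> ennreal"
  assumes nn: "\<And>t. 0 \<le> t \<Longrightarrow> 0 \<le> \<eta> t" and int: "\<And>t. 0 \<le> t \<Longrightarrow> set_integrable lborel {0..t} \<eta>"
    and pos: "\<And>T. 0 \<le> T \<Longrightarrow> 0 \<le> traj y \<eta> T" and small: "\<And>\<delta>. 0 < \<delta> \<Longrightarrow> \<exists>T\<ge>0. traj y \<eta> T < \<delta>"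
    and f[measurable]: "f \<in> borel_measurable borel"
  shows "(\<integral>\<^sup>+r\<in>{0..}. ennreal (\<eta> r) * f (traj y \<eta> r) \<partial>lborel) = (\<integral>\<^sup>+u\<in>{0..y}. f u \<partial>lborel)"
proof -
  let ?Y = "traj y \<eta>"
  have mono: "?Y t \<le> ?Y s" if "0 \<le> s" "s \<le> t" for s t
    using traj_mono(1)[of t \<eta> s y] nn int that by auto
  define Fn where "Fn n r = ennreal (\<eta> r) * f (?Y r) * indicator {0..real n} r" for n :: nat and r
  have Fn_alt: "Fn n r = ennreal (\<eta> r * indicator {0..real n} r) * f (?Y (max 0 (min (real n) r)))" for n r
    using nn[of r] by (auto simp: Fn_def indicator_def)
  have Fn_meas: "Fn n \<in> borel_measurable borel" for n
  proof -
    have "(\<lambda>r. ?Y (max 0 (min (real n) r))) \<in> borel_measurable borel"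
      by (rule antimono_measurable) (intro mono, auto)
    moreover have "(\<lambda>r. \<eta> r * indicator {0..real n} r) \<in> borel_measurable borel"
      by (rule set_integrable_meas[OF int]) simp
    ultimately show ?thesis unfolding Fn_alt[abs_def] by measurable
  qed
  have Fn_inc: "incseq Fn"
  proof (intro incseq_SucI le_funI)
    fix n r
    show "Fn n r \<le> Fn (Suc n) r"
    proof (cases "r \<in> {0..real n}")
      case True
      then have "r \<in> {0..real (Suc n)}" by auto
      then show ?thesis using True by (simp add: Fn_def)
    qed (simp add: Fn_def)
  qed
  have "(\<integral>\<^sup>+r\<in>{0..}. ennreal (\<eta> r) * f (?Y r) \<partial>lborel) = (\<integral>\<^sup>+r. (SUP n. Fn n r) \<partial>lborel)"
    unfolding Fn_def by (subst SUP_indicator_nat) simp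
  also have "\<dots> = (SUP n. integral\<^sup>N lborel (Fn n))"
    using Fn_meas by (intro nn_integral_monotone_convergence_SUP[OF Fn_inc]) auto
  also have "\<dots> = (SUP n::nat. \<integral>\<^sup>+u\<in>{?Y (real n)..y}. f u \<partial>lborel)"
    unfolding Fn_def
    by (intro SUP_cong refl cv_traj) (use nn int in auto)
  finally have L: "(\<integral>\<^sup>+r\<in>{0..}. ennreal (\<eta> r) * f (?Y r) \<partial>lborel) = (SUP n::nat. \<integral>\<^sup>+u\<in>{?Y (real n)..y}. f u \<partial>lborel)" .
  have le: "(SUP n::nat. \<integral>\<^sup>+u\<in>{?Y (real n)..y}. f u \<partial>lborel) \<le> (\<integral>\<^sup>+u\<in>{0..y}. f u \<partial>lborel)"
  proof (intro SUP_least nn_integral_mono)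
    fix n :: nat and u
    have "0 \<le> ?Y (real n)" using pos by simp
    then show "f u * indicator {?Y (real n)..y} u \<le> f u * indicator {0..y} u"
    proof (cases "u \<in> {?Y (real n)..y}")
      case True
      then have "u \<in> {0..y}" using \<open>0 \<le> ?Y (real n)\<close> by auto
      then show ?thesis using True by simp
    qed simp
  qed
  define Gk where "Gk k u = f u * indicator {1 / Suc k..y} u" for k :: nat and u
  have Gk_inc: "incseq Gk"
  proof (intro incseq_SucI le_funI)
    fix k u
    have "1 / real (Suc (Suc k)) \<le> 1 / real (Suc k)" by (simp add: frac_le)
    then show "Gk k u \<le> Gk (Suc k) u" by (auto simp: Gk_def indicator_def)
  qed
  have Gk_SUP: "(SUP k. Gk k u) = f u * indicator {0<..y} u" for u
  proof (cases "0 < u \<and> u \<le> y")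
    case True
    then obtain k :: nat where "1 / Suc k < u"
      by (metis nat_approx_posE)
    then have "f u * indicator {0<..y} u \<le> (SUP k. Gk k u)"
      using True by (intro SUP_upper2[of k]) (auto simp: Gk_def indicator_def)
    moreover have "(SUP k. Gk k u) \<le> f u * indicator {0<..y} u"
    proof (intro SUP_least)
      fix k
      have p: "0 < 1 / real (Suc k)" by simp
      have sub: "{1 / real (Suc k)..y} \<subseteq> {0<..y}"
      proof
        fix x assume x: "x \<in> {1 / real (Suc k)..y}"
        then have "1 / real (Suc k) \<le> x" "x \<le> y" by (simp_all only: atLeastAtMost_iff)
        then show "x \<in> {0<..y}" using p unfolding greaterThanAtMost_iff by linarith
      qed
      show "Gk k u \<le> f u * indicator {0<..y} u"
      proof (cases "u \<in> {1 / real (Suc k)..y}")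
        case True
        then have "u \<in> {0<..y}" using sub by blast
        then show ?thesis using True unfolding Gk_def indicator_def by simp
      qed (simp add: Gk_def)
    qed
    ultimately show ?thesis by (rule antisym[rotated])
  next
    case False
    then have "Gk k u = 0" for k
    proof -
      have p: "0 < 1 / real (Suc k)" by simp
      have sub: "{1 / real (Suc k)..y} \<subseteq> {0<..y}"
      proof
        fix x assume x: "x \<in> {1 / real (Suc k)..y}"
        then have "1 / real (Suc k) \<le> x" "x \<le> y" by (simp_all only: atLeastAtMost_iff)
        then show "x \<in> {0<..y}" using p unfolding greaterThanAtMost_iff by linarith
      qed
      then have "u \<notin> {1 / real (Suc k)..y}" using False by auto
      then show ?thesis by (simp add: Gk_def)
    qed
    then show ?thesis using False by (auto simp: indicator_def)
  qed
  have "(\<integral>\<^sup>+u\<in>{0..y}. f u \<partial>lborel) = (\<integral>\<^sup>+u\<in>{0<..y}. f u \<partial>lborel)"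
    by (intro nn_integral_cong_AE) (use AE_lborel_singleton[of 0] in \<open>auto simp: indicator_def elim!: eventually_mono\<close>)
  also have "\<dots> = (\<integral>\<^sup>+u. (SUP k. Gk k u) \<partial>lborel)" by (simp add: Gk_SUP)
  also have "\<dots> = (SUP k. integral\<^sup>N lborel (Gk k))"
    by (intro nn_integral_monotone_convergence_SUP[OF Gk_inc]) (unfold Gk_def, measurable)
  also have "\<dots> \<le> (SUP n::nat. \<integral>\<^sup>+u\<in>{?Y (real n)..y}. f u \<partial>lborel)"
  proof (intro SUP_least)
    fix k
    obtain T where T: "0 \<le> T" "?Y T < 1 / Suc k" using small[of "1 / Suc k"] by auto
    obtain n :: nat where n: "T \<le> real n" using real_arch_simple by blast
    have "?Y (real n) \<le> ?Y T" using mono[OF T(1) n] .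
    then have "integral\<^sup>N lborel (Gk k) \<le> (\<integral>\<^sup>+u\<in>{?Y (real n)..y}. f u \<partial>lborel)"
      using T(2) unfolding Gk_def by (intro nn_integral_mono) (auto simp: indicator_def)
    then show "integral\<^sup>N lborel (Gk k) \<le> (SUP n::nat. \<integral>\<^sup>+u\<in>{?Y (real n)..y}. f u \<partial>lborel)"
      by (intro SUP_upper2[of n]) auto
  qed
  finally show ?thesis using L le by (intro antisym) auto
qed




lemma nn_reflect:
  fixes f :: "real \<Rightarrow> ennreal"
  assumes [measurable]: "f \<in> borel_measurable borel"
  shows "(\<integral>\<^sup>+r. f (y - r) * indicator {0..v} r \<partial>lborel) = (\<integral>\<^sup>+u. f u * indicator {y - v..y} u \<partial>lborel)"
  by (subst nn_integral_real_affine[where c="-1" and t=y]) (auto simp: indicator_def intro!: nn_integral_cong)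

lemma nn_SUP_left:
  fixes f :: "real \<Rightarrow> ennreal"
  assumes f[measurable]: "f \<in> borel_measurable borel"
  shows "(\<integral>\<^sup>+u\<in>{0..y}. f u \<partial>lborel) = (SUP k::nat. \<integral>\<^sup>+u\<in>{1 / Suc k..y}. f u \<partial>lborel)"
proof -
  define Gk where "Gk k u = f u * indicator {1 / Suc k..y} u" for k :: nat and u
  have Gk_inc: "incseq Gk"
  proof (intro incseq_SucI le_funI)
    fix k u
    have "1 / real (Suc (Suc k)) \<le> 1 / real (Suc k)" by (simp add: frac_le)
    then show "Gk k u \<le> Gk (Suc k) u" by (auto simp: Gk_def indicator_def)
  qed
  have Gk_SUP: "(SUP k. Gk k u) = f u * indicator {0<..y} u" for u
  proof (cases "0 < u \<and> u \<le> y")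
    case True
    then obtain k :: nat where "1 / Suc k < u"
      by (metis nat_approx_posE)
    then have "f u * indicator {0<..y} u \<le> (SUP k. Gk k u)"
      using True by (intro SUP_upper2[of k]) (auto simp: Gk_def indicator_def)
    moreover have "(SUP k. Gk k u) \<le> f u * indicator {0<..y} u"
    proof (intro SUP_least)
      fix k
      have p: "0 < 1 / real (Suc k)" by simp
      have sub: "{1 / real (Suc k)..y} \<subseteq> {0<..y}"
      proof
        fix x assume x: "x \<in> {1 / real (Suc k)..y}"
        then have "1 / real (Suc k) \<le> x" "x \<le> y" by (simp_all only: atLeastAtMost_iff)
        then show "x \<in> {0<..y}" using p unfolding greaterThanAtMost_iff by linarith
      qed
      show "Gk k u \<le> f u * indicator {0<..y} u"
      proof (cases "u \<in> {1 / real (Suc k)..y}")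
        case True
        then have "u \<in> {0<..y}" using sub by blast
        then show ?thesis using True unfolding Gk_def indicator_def by simp
      qed (simp add: Gk_def)
    qed
    ultimately show ?thesis by (rule antisym[rotated])
  next
    case False
    then have "Gk k u = 0" for k
    proof -
      have p: "0 < 1 / real (Suc k)" by simp
      have sub: "{1 / real (Suc k)..y} \<subseteq> {0<..y}"
      proof
        fix x assume x: "x \<in> {1 / real (Suc k)..y}"
        then have "1 / real (Suc k) \<le> x" "x \<le> y" by (simp_all only: atLeastAtMost_iff)
        then show "x \<in> {0<..y}" using p unfolding greaterThanAtMost_iff by linarith
      qed
      then have "u \<notin> {1 / real (Suc k)..y}" using False by auto
      then show ?thesis by (simp add: Gk_def)
    qed
    then show ?thesis using False by (auto simp: indicator_def)
  qed
  have "(\<integral>\<^sup>+u\<in>{0..y}. f u \<partial>lborel) = (\<integral>\<^sup>+u\<in>{0<..y}. f u \<partial>lborel)"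
    by (intro nn_integral_cong_AE) (use AE_lborel_singleton[of 0] in \<open>auto simp: indicator_def elim!: eventually_mono\<close>)
  also have "\<dots> = (\<integral>\<^sup>+u. (SUP k. Gk k u) \<partial>lborel)" by (simp add: Gk_SUP)
  also have "\<dots> = (SUP k. integral\<^sup>N lborel (Gk k))"
    by (intro nn_integral_monotone_convergence_SUP[OF Gk_inc]) (unfold Gk_def, measurable)
  finally show ?thesis by (simp add: Gk_def[abs_def])
qed


lemma meas_Ici:
  fixes \<eta> :: "real \<Rightarrow> real"
  assumes int: "\<And>t. 0 \<le> t \<Longrightarrow> set_integrable lborel {0..t} \<eta>"
  shows "(\<lambda>t. \<eta> t * indicator {0..} t) \<in> borel_measurable borel"
proof (rule borel_measurable_LIMSEQ_real)
  show "(\<lambda>t. \<eta> t * indicator {0..real n} t) \<in> borel_measurable borel" for n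
    by (rule set_integrable_meas[OF int]) simp
  fix t :: real
  obtain N :: nat where N: "t \<le> real N" using real_arch_simple by blast
  have "\<forall>n\<ge>N. \<eta> t * indicator {0..real n} t = \<eta> t * indicator {0..} t"
  proof (intro allI impI)
    fix n assume "N \<le> n"
    then have "t \<le> real n" using N by (meson of_nat_le_iff order_trans)
    then show "\<eta> t * indicator {0..real n} t = \<eta> t * indicator {0..} t" by (auto simp: indicator_def)
  qed
  then show "(\<lambda>n. \<eta> t * indicator {0..real n} t) \<longlonglongrightarrow> \<eta> t * indicator {0..} t"
    by (intro tendsto_eventually) (auto simp: eventually_sequentially)
qed

locale Fset =
  fixes F :: "real \<Rightarrow> real"
  assumes F_nonneg: "\<forall>x\<ge>0. 0 \<le> F x"
    and F_cont: "continuous_on {0..} F"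
    and F_diff: "\<forall>x>0. F differentiable (at x)"
    and F'_cont: "continuous_on {0<..} (deriv F)"
    and F_zero: "F 0 = 0"
    and F_conv: "strictly_convex_on {0..} (\<lambda>x. x * F x)"
    and F_mono: "strict_mono_on {0<..} (\<lambda>x. x\<^sup>2 * deriv F x)"
    and F_lim: "filterlim (\<lambda>x. x\<^sup>2 * deriv F x) at_top at_top"
begin

definition h :: "real \<Rightarrow> real" where "h x = x\<^sup>2 * deriv F x"

lemma F_deriv: "0 < x \<Longrightarrow> (F has_real_derivative deriv F x) (at x)"
  using F_diff DERIV_deriv_iff_real_differentiable by blast

lemma h_cont: "continuous_on {0<..} h"
  unfolding h_def by (intro continuous_intros F'_cont)

lemma h_strict: "0 < x1 \<Longrightarrow> x1 < x2 \<Longrightarrow> h x1 < h x2"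
  using F_mono unfolding h_def by (auto intro: strict_mono_onD)

lemma h_small: assumes w: "0 < w" shows "\<exists>x>0. h x < w"
proof (rule ccontr)
  assume "\<not> ?thesis"
  then have hw: "\<And>x. 0 < x \<Longrightarrow> w \<le> h x" by force
  define q where "q x = F x + w / x" for x
  define x0 where "x0 = w / (F 1 + w + 1)"
  have F1: "0 \<le> F 1" using F_nonneg by auto
  have x0: "0 < x0" "x0 \<le> 1" using w F1 by (auto simp: x0_def field_simps)
  have "q x0 \<le> q 1"
  proof (rule DERIV_nonneg_imp_nondecreasing[OF x0(2)])
    fix x assume x: "x0 \<le> x" "x \<le> 1"
    then have xp: "0 < x" using x0 by auto
    have "(q has_real_derivative deriv F x - w / x\<^sup>2) (at x)"
      unfolding q_def using xp
      by (auto intro!: derivative_eq_intros F_deriv simp: power2_eq_square field_simps)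
    moreover have "deriv F x - w / x\<^sup>2 \<ge> 0"
      using hw[OF xp] xp by (simp add: h_def field_simps)
    ultimately show "\<exists>y. (q has_real_derivative y) (at x) \<and> 0 \<le> y" by blast
  qed
  moreover have "w / x0 = F 1 + w + 1" using w F1 by (simp add: x0_def field_simps)
  moreover have "0 \<le> F x0" using F_nonneg x0 by auto
  ultimately show False by (simp add: q_def)
qed

lemma h_large: "\<exists>x>0. w < h x"
proof -
  have "eventually (\<lambda>x. w + 1 \<le> h x) at_top"
    using F_lim unfolding h_def filterlim_at_top by blast
  then obtain N where N: "\<And>x. x \<ge> N \<Longrightarrow> w + 1 \<le> h x" by (auto simp: eventually_at_top_linorder)
  show ?thesis using N[of "max N 1"] by (intro exI[of _ "max N 1"]) auto
qed

lemma h_exists: assumes w: "0 < w" shows "\<exists>x>0. h x = w"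
proof -
  obtain x0 where x0: "0 < x0" "h x0 < w" using h_small[OF w] by auto
  obtain x1 where x1: "0 < x1" "w < h x1" using h_large by auto
  have "x0 < x1"
    using x0 x1 h_strict[of x1 x0] by (cases "x0 < x1") (auto simp: not_less le_less)
  then have "\<exists>x. x0 \<le> x \<and> x \<le> x1 \<and> h x = w"
    using x0 x1 by (intro IVT') (auto intro: continuous_on_subset[OF h_cont])
  then obtain x where "x0 \<le> x" "h x = w" by auto
  then show ?thesis using x0 by (intro exI[of _ x]) auto
qed

lemma h_inj: "0 < x1 \<Longrightarrow> 0 < x2 \<Longrightarrow> h x1 = h x2 \<Longrightarrow> x1 = x2"
  using h_strict[of x1 x2] h_strict[of x2 x1] by (cases x1 x2 rule: linorder_cases) auto

lemma G_pos: assumes "0 < w" shows "0 < invG F w" "h (invG F w) = w"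
proof -
  have eu: "\<exists>!x. 0 < x \<and> x\<^sup>2 * deriv F x = w"
    using h_exists[OF assms] h_inj unfolding h_def by blast
  have "invG F w = (THE x. 0 < x \<and> x\<^sup>2 * deriv F x = w)"
    unfolding invG_def using assms by simp
  then have "0 < invG F w \<and> (invG F w)\<^sup>2 * deriv F (invG F w) = w"
    using theI'[OF eu] by simp
  then show "0 < invG F w" "h (invG F w) = w" by (auto simp: h_def)
qed

lemma G_nonpos: "w \<le> 0 \<Longrightarrow> invG F w = 0"
  by (simp add: invG_def)

lemma G_nn: "0 \<le> invG F w"
  using G_pos[of w] G_nonpos[of w] by (cases "0 < w") auto

lemma G_mono: assumes "w1 \<le> w2" shows "invG F w1 \<le> invG F w2"
proof (cases "w1 \<le> 0")
  case True then show ?thesis using G_nn G_nonpos by simp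
next
  case False
  then have p: "0 < w1" "0 < w2" using assms by auto
  show ?thesis
  proof (rule ccontr)
    assume "\<not> ?thesis"
    then have "h (invG F w2) < h (invG F w1)" using G_pos[OF p(2)] by (intro h_strict) auto
    then show False using G_pos[OF p(1)] G_pos[OF p(2)] assms by simp
  qed
qed

lemma G_measurable: "invG F \<in> borel_measurable borel"
  by (rule borel_measurable_mono) (auto simp: mono_def intro: G_mono)

lemma phi_convex: "convex_on {0..} (\<lambda>x. x * F x)"
proof (rule convex_onI)
  fix t x y :: real assume t: "0 < t" "t < 1" and xy: "x \<in> {0..}" "y \<in> {0..}"
  show "((1 - t) *\<^sub>R x + t *\<^sub>R y) * F ((1 - t) *\<^sub>R x + t *\<^sub>R y) \<le> (1 - t) * (x * F x) + t * (y * F y)"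
  proof (cases "x = y")
    case True
    then show ?thesis by (simp add: algebra_simps)
  next
    case False
    then show ?thesis using F_conv t xy unfolding strictly_convex_on_def by (auto intro: less_imp_le)
  qed
qed simp

lemma phi_strict: "0 \<le> a \<Longrightarrow> 0 \<le> b \<Longrightarrow> a \<noteq> b \<Longrightarrow>
   ((a + b) / 2) * F ((a + b) / 2) < (a * F a + b * F b) / 2"
  using F_conv unfolding strictly_convex_on_def
  apply (drule_tac x=a in bspec, simp)
  apply (drule_tac x=b in bspec, simp)
  apply (drule mp, assumption)
  apply (drule_tac x="1/2" in spec)
  by (simp add: field_simps)

end

locale Kset = Fset +
  fixes K :: "real \<Rightarrow> real" and A y m :: real
  assumes A_pos: "0 < A" and y_nn: "0 \<le> y"
    and K0: "K 0 = 0" and K_pos: "\<And>u. 0 < u \<Longrightarrow> 0 < K u"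
    and K_mono: "\<And>u v. 0 \<le> u \<Longrightarrow> u \<le> v \<Longrightarrow> K u \<le> K v"
    and K_lin: "m \<noteq> 0 \<Longrightarrow> \<exists>a>0. \<forall>u\<in>{0..y}. a * u \<le> K u"
    and K_quad: "m = 0 \<Longrightarrow> \<exists>b>0. \<forall>u\<in>{0..y}. b * u\<^sup>2 \<le> K u"
begin

definition psi where "psi u = invG F (K u / A)"
definition cc where "cc u = K u / psi u + A * F (psi u)"
definition gg where "gg xi u = K u + A * xi * F xi - xi * cc u"

lemma K_nn: "0 \<le> u \<Longrightarrow> 0 \<le> K u"
  using K_mono[of 0 u] K0 by simp

lemma psi0: "psi 0 = 0" by (simp add: psi_def K0 G_nonpos)
lemma cc0: "cc 0 = 0" by (simp add: cc_def psi0 F_zero)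
lemma psi_nn: "0 \<le> psi u" by (simp add: psi_def G_nn)
lemma psi_pos: "0 < u \<Longrightarrow> 0 < psi u"
  unfolding psi_def using K_pos A_pos by (intro G_pos) auto
lemma psi_mono: "0 \<le> u \<Longrightarrow> u \<le> v \<Longrightarrow> psi u \<le> psi v"
  unfolding psi_def using K_mono A_pos by (intro G_mono divide_right_mono) auto
lemma psi_h: "0 < u \<Longrightarrow> (psi u)\<^sup>2 * deriv F (psi u) = K u / A"
  using G_pos(2)[of "K u / A"] K_pos A_pos unfolding psi_def h_def by auto

lemma gg_mid:
  assumes "0 \<le> a" "0 \<le> b" "a \<noteq> b"
  shows "gg ((a + b) / 2) u < (gg a u + gg b u) / 2"
proof -
  have "A * (((a + b) / 2) * F ((a + b) / 2)) < A * ((a * F a + b * F b) / 2)"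
    using phi_strict[OF assms] A_pos by simp
  moreover have "gg ((a + b) / 2) u = K u + A * (((a + b) / 2) * F ((a + b) / 2)) - ((a + b) / 2) * cc u"
    by (simp add: gg_def)
  moreover have "(gg a u + gg b u) / 2 = K u + A * ((a * F a + b * F b) / 2) - ((a + b) / 2) * cc u"
    unfolding gg_def by (simp add: algebra_simps add_divide_distrib diff_divide_distrib)
  ultimately show ?thesis by linarith
qed

lemma gg_psi: "0 \<le> u \<Longrightarrow> gg (psi u) u = 0"
proof (cases "u = 0")
  case True then show ?thesis by (simp add: gg_def psi0 cc0 K0)
next
  case False
  assume "0 \<le> u"
  then have "0 < psi u" using False psi_pos by auto
  then show ?thesis by (simp add: gg_def cc_def field_simps)
qed

lemma gg_nn: assumes u: "0 \<le> u" and xi: "0 \<le> xi" shows "0 \<le> gg xi u"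
proof (cases "u = 0")
  case True
  then show ?thesis using F_nonneg xi A_pos by (simp add: gg_def cc0 K0)
next
  case False
  then have up: "0 < u" using u by auto
  define p where "p = psi u"
  have p: "0 < p" using psi_pos[OF up] by (simp add: p_def)
  have hp: "p\<^sup>2 * deriv F p = K u / A" using psi_h[OF up] by (simp add: p_def)
  have der0: "((\<lambda>x. x * F x) has_real_derivative (1 * F p + p * deriv F p)) (at p)"
    using DERIV_mult[OF DERIV_ident F_deriv[OF p]] by (simp add: algebra_simps)
  have der: "((\<lambda>x. x * F x) has_real_derivative (F p + p * deriv F p)) (at p within {0..})"
    using has_field_derivative_at_within[OF der0] by simp
  have conn: "connected {0::real..}" by (simp add: is_interval_connected)
  have int: "p \<in> interior {0::real..}" using p by simp
  have tang: "xi * F xi - p * F p \<ge> (F p + p * deriv F p) * (xi - p)"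
    using convex_on_imp_above_tangent[OF phi_convex conn int _ der] xi by simp
  have e1: "A * (p * deriv F p) = K u / p" using hp p A_pos by (simp add: field_simps power2_eq_square)
  have e2: "A * (p\<^sup>2 * deriv F p) = K u" using hp A_pos by simp
  have tA: "A * (xi * F xi) \<ge> A * (p * F p + (F p + p * deriv F p) * (xi - p))"
    using tang A_pos by (intro mult_left_mono) auto
  have "A * (xi * F xi) \<ge> A * F p * xi + (K u / p) * xi - K u"
  proof -
    have e3: "A * (p * (xi * deriv F p)) = xi * (K u / p)"
    proof -
      have "A * (p * (xi * deriv F p)) = xi * (A * (p * deriv F p))" by (simp add: algebra_simps)
      then show ?thesis using e1 by simp
    qed
    show ?thesis using tA e2 e3 by (simp add: algebra_simps power2_eq_square)
  qed
  then show ?thesis unfolding gg_def cc_def p_def[symmetric] by (simp add: algebra_simps)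
qed

lemma gg_zero: assumes u: "0 \<le> u" and xi: "0 \<le> xi" and z: "gg xi u = 0" shows "xi = psi u"
proof (rule ccontr)
  assume ne: "xi \<noteq> psi u"
  have "gg ((xi + psi u) / 2) u < (gg xi u + gg (psi u) u) / 2"
    using gg_mid[OF xi psi_nn ne] .
  also have "\<dots> = 0" using z gg_psi[OF u] by simp
  finally show False using gg_nn[OF u, of "(xi + psi u) / 2"] xi psi_nn[of u] by simp
qed

lemma cc_nn: "0 \<le> u \<Longrightarrow> 0 \<le> cc u"
  unfolding cc_def using K_nn psi_nn F_nonneg A_pos by (auto intro!: add_nonneg_nonneg divide_nonneg_nonneg)

lemma cc_bound: assumes "0 \<le> u" "u \<le> y" shows "cc u \<le> K y + A * F 1"
proof -
  have "0 \<le> gg 1 u" using gg_nn[OF assms(1)] by simp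
  then have "cc u \<le> K u + A * F 1" by (simp add: gg_def)
  then show ?thesis using K_mono[OF assms] by simp
qed


definition psie where "psie u = psi (max 0 u)"
definition Ke where "Ke u = K (max 0 u)"
definition cce where "cce u = cc (max 0 u)"
definition Fe where "Fe x = indicator {0..} x * F x"

lemma Ke_meas[measurable]: "Ke \<in> borel_measurable borel"
  by (rule borel_measurable_mono) (auto simp: mono_def Ke_def intro: K_mono)
lemma psie_meas[measurable]: "psie \<in> borel_measurable borel"
  by (rule borel_measurable_mono) (auto simp: mono_def psie_def intro: psi_mono)
lemma Fe_meas[measurable]: "Fe \<in> borel_measurable borel"
  using borel_measurable_continuous_on_indicator[OF _ F_cont] unfolding Fe_def[abs_def] by simp
lemma psie_Ke: "psie u = invG F (Ke u / A)" by (simp add: psie_def Ke_def psi_def)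
lemma F_psi: "F (psi u) = Fe (psi u)" using psi_nn by (simp add: Fe_def)
lemma cce_alt: "cce u = Ke u / psie u + A * Fe (psie u)"
  by (simp add: cce_def cc_def Ke_def psie_def F_psi)
lemma cce_meas[measurable]: "cce \<in> borel_measurable borel"
  unfolding cce_alt[abs_def] using Ke_meas psie_meas Fe_meas by measurable

abbreviation "Ph \<equiv> Phi K A F y"
abbreviation "ta \<equiv> tau K A F y"
abbreviation "Ys \<equiv> Ystar K A F y"

lemma Ph_alt: "0 \<le> z \<Longrightarrow> Ph z = (\<integral>\<^sup>+u. ennreal (1 / psie u) * indicator {z..y} u \<partial>lborel)"
  unfolding Phi_def psie_def psi_def by (intro nn_integral_cong) (auto simp: indicator_def)

lemma Ph_mono: assumes "0 \<le> z1" "z1 \<le> z2" shows "Ph z2 \<le> Ph z1"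
proof -
  have "0 \<le> z2" using assms by simp
  show ?thesis unfolding Ph_alt[OF assms(1)] Ph_alt[OF \<open>0 \<le> z2\<close>]
    by (intro nn_integral_mono) (use assms in \<open>auto simp: indicator_def\<close>)
qed

lemma Ph_fin: assumes "0 < z" shows "Ph z < \<infinity>"
proof -
  have "Ph z \<le> (\<integral>\<^sup>+u. ennreal (1 / psi z) * indicator {z..y} u \<partial>lborel)"
    unfolding Ph_alt[OF less_imp_le[OF assms]]
  proof (intro nn_integral_mono)
    fix u
    show "ennreal (1 / psie u) * indicator {z..y} u \<le> ennreal (1 / psi z) * indicator {z..y} u"
    proof (cases "u \<in> {z..y}")
      case True
      then have "psi z \<le> psie u" "0 < psi z" using assms psi_mono[of z u] psi_pos[of z] by (auto simp: psie_def)
      then have "1 / psie u \<le> 1 / psi z" by (intro divide_left_mono) auto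
      then show ?thesis using True by (simp add: ennreal_leI)
    qed simp
  qed
  also have "\<dots> < \<infinity>" by (cases "z \<le> y") (simp_all add: nn_integral_cmult_indicator ennreal_mult_less_top)
  finally show ?thesis .
qed

lemma Ph_y: "Ph y = 0"
proof -
  have "Ph y = (\<integral>\<^sup>+u. ennreal (1 / psie y) * indicator {y} u \<partial>lborel)"
    unfolding Ph_alt[OF y_nn] by (intro nn_integral_cong) (auto simp: indicator_def)
  also have "\<dots> = 0" by (simp add: nn_integral_cmult_indicator)
  finally show ?thesis .
qed

lemma Ph_split:
  assumes z: "0 \<le> z1" "z1 < z2" "z2 \<le> y"
  shows "Ph z2 + ennreal ((z2 - z1) / psi y) \<le> Ph z1"
proof -
  have yp: "0 < y" using z by auto
  have py: "0 < psi y" using psi_pos[OF yp] .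
  have "Ph z2 + ennreal ((z2 - z1) / psi y) = (\<integral>\<^sup>+u. ennreal (1 / psie u) * indicator {z2..y} u + ennreal (1 / psi y) * indicator {z1<..<z2} u \<partial>lborel)"
    using z py unfolding Ph_alt[of z2, OF order_trans[OF z(1) less_imp_le[OF z(2)]]]
    by (subst nn_integral_add) (auto simp: nn_integral_cmult_indicator ennreal_mult[symmetric] divide_simps intro: measurable_compose[OF psie_meas])
  also have "\<dots> \<le> Ph z1"
    unfolding Ph_alt[OF z(1)]
  proof (intro nn_integral_mono)
    fix u
    show "ennreal (1 / psie u) * indicator {z2..y} u + ennreal (1 / psi y) * indicator {z1<..<z2} u \<le> ennreal (1 / psie u) * indicator {z1..y} u"
    proof (cases "u \<in> {z1<..<z2}")
      case True
      then have "0 < u" "u \<le> y" using z by auto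
      then have "psie u \<le> psi y" "0 < psie u" using psi_mono[of u y] psi_pos[of u] by (auto simp: psie_def)
      then have "1 / psi y \<le> 1 / psie u" by (intro divide_left_mono) auto
      then show ?thesis using True z by (auto simp: indicator_def ennreal_leI)
    next
      case False
      then show ?thesis using z by (auto simp: indicator_def)
    qed
  qed
  finally show ?thesis .
qed

lemma Ph_inj:
  assumes z: "z1 \<in> {0..y}" "z2 \<in> {0..y}" and eq: "Ph z1 = Ph z2" and fin: "Ph z1 < \<infinity>"
  shows "z1 = z2"
proof (rule ccontr)
  assume "z1 \<noteq> z2"
  then consider "z1 < z2" | "z2 < z1" by linarith
  then show False
  proof cases
    case 1
    then have "0 < psi y" using z psi_pos[of y] by auto
    then have pos: "0 < (z2 - z1) / psi y" using 1 by simp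
    have "Ph z2 + ennreal ((z2 - z1) / psi y) \<le> Ph z2" using Ph_split[of z1 z2] 1 z eq by auto
    then show False using pos fin eq by (cases "Ph z2") (auto simp: ennreal_plus[symmetric] simp del: ennreal_plus)
  next
    case 2
    then have "0 < psi y" using z psi_pos[of y] by auto
    then have pos: "0 < (z1 - z2) / psi y" using 2 by simp
    have "Ph z1 + ennreal ((z1 - z2) / psi y) \<le> Ph z1" using Ph_split[of z2 z1] 2 z eq by auto
    then show False using pos fin eq by (cases "Ph z1") (auto simp: ennreal_plus[symmetric] simp del: ennreal_plus)
  qed
qed


lemma Ph0: "ta = Ph 0" by (simp add: tau_def)

lemma Ph_SUP: "Ph 0 = (SUP k::nat. Ph (1 / Suc k))"
proof -
  have "Ph 0 = (\<integral>\<^sup>+u\<in>{0..y}. ennreal (1 / psie u) \<partial>lborel)" by (simp add: Ph_alt)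
  also have "\<dots> = (SUP k::nat. \<integral>\<^sup>+u\<in>{1 / Suc k..y}. ennreal (1 / psie u) \<partial>lborel)"
    by (rule nn_SUP_left) simp
  also have "\<dots> = (SUP k::nat. Ph (1 / Suc k))"
    by (intro SUP_cong refl) (simp add: Ph_alt)
  finally show ?thesis .
qed

lemma Ph_exists: assumes t: "ennreal t \<le> ta" shows "\<exists>z\<in>{0..y}. Ph z = ennreal t"
proof (cases "t \<le> 0")
  case True
  then show ?thesis using Ph_y y_nn by (intro bexI[of _ y]) (auto simp: ennreal_eq_0_iff)
next
  case tpos: False
  show ?thesis
  proof (cases "ennreal t = ta")
    case True
    then show ?thesis using y_nn by (intro bexI[of _ 0]) (auto simp: Ph0)
  next
    case False
    then have lt: "ennreal t < (SUP k::nat. Ph (1 / Suc k))" using t Ph_SUP Ph0 by simp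
    then obtain k :: nat where k: "ennreal t < Ph (1 / Suc k)" by (auto simp: less_SUP_iff)
    define z0 where "z0 = 1 / real (Suc k)"
    have z0p: "0 < z0" by (simp add: z0_def)
    have tz0: "ennreal t < Ph z0" using k by (simp add: z0_def)
    have z0y: "z0 < y"
    proof (rule ccontr)
      assume "\<not> z0 < y"
      then have "Ph z0 \<le> Ph y" using Ph_mono[OF y_nn] by simp
      then show False using tz0 Ph_y by simp
    qed
    define V where "V = y - z0"
    have Vp: "0 < V" using z0y by (simp add: V_def)
    define \<rho> where "\<rho> r = 1 / psie (y - r) * indicator {0..V} r" for r
    have \<rho>_nn: "0 \<le> \<rho> r" for r using psi_nn by (simp add: \<rho>_def psie_def)
    have \<rho>_meas: "\<rho> \<in> borel_measurable borel" unfolding \<rho>_def[abs_def] by measurable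
    have \<rho>_enn: "(\<integral>\<^sup>+r. ennreal (\<rho> r) * indicator {0..v} r \<partial>lborel) = Ph (y - v)" if "0 \<le> v" "v \<le> V" for v
    proof -
      have "(\<integral>\<^sup>+r. ennreal (\<rho> r) * indicator {0..v} r \<partial>lborel) = (\<integral>\<^sup>+r. ennreal (1 / psie (y - r)) * indicator {0..v} r \<partial>lborel)"
        using that by (intro nn_integral_cong) (auto simp: \<rho>_def indicator_def)
      also have "\<dots> = (\<integral>\<^sup>+u. ennreal (1 / psie u) * indicator {y - v..y} u \<partial>lborel)"
        by (rule nn_reflect) simp
      also have "\<dots> = Ph (y - v)" using that z0p by (subst Ph_alt) (auto simp: V_def)
      finally show ?thesis .
    qed
    have \<rho>_int: "integrable lborel \<rho>"
    proof (rule integrableI_nonneg)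
      show "\<rho> \<in> borel_measurable lborel" using \<rho>_meas by simp
      show "AE x in lborel. 0 \<le> \<rho> x" using \<rho>_nn by simp
      have "(\<integral>\<^sup>+x. ennreal (\<rho> x) \<partial>lborel) = (\<integral>\<^sup>+r. ennreal (\<rho> r) * indicator {0..V} r \<partial>lborel)"
        by (intro nn_integral_cong) (auto simp: \<rho>_def indicator_def)
      also have "\<dots> = Ph z0" using \<rho>_enn[of V] Vp by (simp add: V_def)
      finally show "(\<integral>\<^sup>+x. ennreal (\<rho> x) \<partial>lborel) < \<infinity>" using Ph_fin[OF z0p] by simp
    qed
    define S where "S v = (LINT r:{0..v}|lborel. \<rho> r)" for v
    have S_enn: "ennreal (S v) = Ph (y - v)" if "0 \<le> v" "v \<le> V" for v
      unfolding S_def Xenn[OF \<rho>_nn \<rho>_int] using \<rho>_enn[OF that] by simp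
    have S_cont: "continuous_on UNIV S"
      unfolding S_def by (rule continuous_on_LBINT) (use integrable_mult_indicator[OF _ \<rho>_int] in \<open>auto simp: set_integrable_def\<close>)
    have "ennreal (S 0) = 0" using S_enn[of 0] Vp Ph_y by simp
    then have S0: "S 0 \<le> t" using tpos by (simp add: ennreal_eq_0_iff)
    have "ennreal t < ennreal (S V)" using S_enn[of V] Vp tz0 by (simp add: V_def)
    then have SV: "t \<le> S V"
    proof -
      assume a: "ennreal t < ennreal (S V)"
      show ?thesis
      proof (rule ccontr)
        assume "\<not> t \<le> S V"
        then have "ennreal (S V) \<le> ennreal t" by (intro ennreal_leI) auto
        then show False using a by simp
      qed
    qed
    obtain v where v: "0 \<le> v" "v \<le> V" "S v = t"
      using IVT'[of S 0 t V] S0 SV Vp continuous_on_subset[OF S_cont] by auto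
    show ?thesis
      using S_enn[OF v(1,2)] v z0p by (intro bexI[of _ "y - v"]) (auto simp: V_def)
  qed
qed

lemma Ys_char: assumes t: "ennreal t \<le> ta" shows "Ys t \<in> {0..y}" "Ph (Ys t) = ennreal t"
proof -
  have eu: "\<exists>!z. 0 \<le> z \<and> z \<le> y \<and> Ph z = ennreal t"
  proof -
    obtain z where z: "z \<in> {0..y}" "Ph z = ennreal t" using Ph_exists[OF t] by auto
    show ?thesis
    proof (rule ex1I[of _ z])
      show "0 \<le> z \<and> z \<le> y \<and> Ph z = ennreal t" using z by auto
      fix z' assume "0 \<le> z' \<and> z' \<le> y \<and> Ph z' = ennreal t"
      then show "z' = z" using Ph_inj[of z' z] z by auto
    qed
  qed
  have "Ys t = (THE z. 0 \<le> z \<and> z \<le> y \<and> Ph z = ennreal t)"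
    using t by (simp add: Ystar_def)
  then have "0 \<le> Ys t \<and> Ys t \<le> y \<and> Ph (Ys t) = ennreal t" using theI'[OF eu] by simp
  then show "Ys t \<in> {0..y}" "Ph (Ys t) = ennreal t" by auto
qed

lemma Ys_big: "ta < ennreal t \<Longrightarrow> Ys t = 0"
  by (simp add: Ystar_def)

lemma Ys_range: "Ys t \<in> {0..y}"
  using Ys_char(1)[of t] Ys_big[of t] y_nn by (cases "ennreal t \<le> ta") auto

lemma Ys_eqI: assumes "z \<in> {0..y}" "Ph z = ennreal t" shows "Ys t = z"
proof -
  have t: "ennreal t \<le> ta" using Ph_mono[of 0 z] assms by (auto simp: Ph0)
  show ?thesis using Ph_inj[of "Ys t" z] Ys_char[OF t] assms by auto
qed

lemma Ys_anti: assumes "s \<le> t" shows "Ys t \<le> Ys s"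
proof (cases "ennreal t \<le> ta")
  case False
  then show ?thesis using Ys_big[of t] Ys_range[of s] by auto
next
  case True
  have s: "ennreal s \<le> ta" using True assms order_trans ennreal_leI by blast
  show ?thesis
  proof (rule ccontr)
    assume nt: "\<not> Ys t \<le> Ys s"
    then have "Ph (Ys t) \<le> Ph (Ys s)" using Ph_mono[of "Ys s" "Ys t"] Ys_range[of s] by auto
    then have "ennreal t \<le> ennreal s" using Ys_char(2)[OF True] Ys_char(2)[OF s] by simp
    then have "Ph (Ys t) = Ph (Ys s)" using Ys_char(2)[OF True] Ys_char(2)[OF s] assms
      by (metis antisym ennreal_leI)
    moreover have fin: "Ph (Ys t) < \<infinity>" using Ys_char(2)[OF True] by simp
    ultimately have "Ys t = Ys s" using Ph_inj[OF Ys_range[of t] Ys_range[of s]] by blast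
    then show False using nt by simp
  qed
qed

lemma Ys_meas: "Ys \<in> borel_measurable borel"
  by (rule antimono_measurable) (rule Ys_anti)

lemma Ys_small: assumes d: "0 < \<delta>" shows "\<exists>T\<ge>0. Ys T < \<delta>"
proof (cases "y < \<delta>")
  case True
  then show ?thesis using Ys_range[of 0] by (intro exI[of _ 0]) auto
next
  case False
  show ?thesis
  proof (cases "ta = \<infinity>")
    case True
    have fin: "Ph \<delta> < \<infinity>" using Ph_fin[OF d] .
    define T where "T = enn2real (Ph \<delta>) + 1"
    have T0: "0 \<le> T" by (simp add: T_def)
    have "Ph (Ys T) = ennreal T" using Ys_char(2)[of T] True by simp
    moreover have "Ph \<delta> < ennreal T" using fin unfolding T_def
      by (cases "Ph \<delta>") (auto simp: ennreal_less_iff)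
    ultimately have "Ph \<delta> < Ph (Ys T)" by simp
    then have "Ys T < \<delta>" using Ph_mono[of \<delta> "Ys T"] d by (cases "\<delta> \<le> Ys T") auto
    then show ?thesis using T0 by auto
  next
    case False
    define T where "T = enn2real ta"
    have "ennreal T = ta" using False by (simp add: T_def less_top)
    then have "Ys T = 0" using Ys_eqI[of 0 T] y_nn Ph0 by simp
    then show ?thesis using d by (intro exI[of _ T]) (auto simp: T_def)
  qed
qed


definition xs where "xs t = psi (Ys t)"

lemma xs_alt: "xs t = psie (Ys t)" using Ys_range[of t] by (simp add: xs_def psie_def)
lemma xs_meas[measurable]: "xs \<in> borel_measurable borel"
  unfolding xs_alt[abs_def] using Ys_meas by measurable
lemma xs_nn: "0 \<le> xs t" by (simp add: xs_def psi_nn)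

lemma C_int:
  assumes t: "0 \<le> t" "ennreal t \<le> ta"
  shows "(\<integral>\<^sup>+s. ennreal (xs s) * indicator {0..t} s \<partial>lborel) = ennreal (y - Ys t)"
proof -
  define z where "z = Ys t"
  have z: "z \<in> {0..y}" "Ph z = ennreal t" using Ys_char[OF t(2)] by (auto simp: z_def)
  define V where "V = y - z"
  have V: "0 \<le> V" "V \<le> y" using z by (auto simp: V_def)
  define \<rho> where "\<rho> r = 1 / psie (y - r) * indicator {0..V} r" for r
  have \<rho>_nn: "0 \<le> \<rho> r" for r using psi_nn by (simp add: \<rho>_def psie_def)
  have \<rho>_meas: "\<rho> \<in> borel_measurable borel" unfolding \<rho>_def[abs_def] by measurable
  have \<rho>_supp: "\<rho> r = 0" if "r \<notin> {0..V}" for r using that by (simp add: \<rho>_def)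
  have \<rho>_enn: "(\<integral>\<^sup>+r. ennreal (\<rho> r) * indicator {0..v} r \<partial>lborel) = Ph (y - v)" if "0 \<le> v" "v \<le> V" for v
  proof -
    have "(\<integral>\<^sup>+r. ennreal (\<rho> r) * indicator {0..v} r \<partial>lborel) = (\<integral>\<^sup>+r. ennreal (1 / psie (y - r)) * indicator {0..v} r \<partial>lborel)"
      using that by (intro nn_integral_cong) (auto simp: \<rho>_def indicator_def)
    also have "\<dots> = (\<integral>\<^sup>+u. ennreal (1 / psie u) * indicator {y - v..y} u \<partial>lborel)"
      by (rule nn_reflect) simp
    also have "\<dots> = Ph (y - v)" using that z by (subst Ph_alt) (auto simp: V_def)
    finally show ?thesis .
  qed
  have \<rho>_int: "integrable lborel \<rho>"
  proof (rule integrableI_nonneg)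
    show "\<rho> \<in> borel_measurable lborel" using \<rho>_meas by simp
    show "AE x in lborel. 0 \<le> \<rho> x" using \<rho>_nn by simp
    have "(\<integral>\<^sup>+x. ennreal (\<rho> x) \<partial>lborel) = (\<integral>\<^sup>+r. ennreal (\<rho> r) * indicator {0..V} r \<partial>lborel)"
      by (intro nn_integral_cong) (auto simp: \<rho>_def indicator_def)
    also have "\<dots> = Ph z" using \<rho>_enn[of V] V by (simp add: V_def)
    finally show "(\<integral>\<^sup>+x. ennreal (\<rho> x) \<partial>lborel) < \<infinity>" using z by simp
  qed
  define X where "X r = (LINT r:{0..r}|lborel. \<rho> r)" for r
  have X_nn: "0 \<le> X r" for r
    unfolding X_def set_lebesgue_integral_def by (intro integral_nonneg_AE) (auto simp: \<rho>_nn)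
  have X_enn: "ennreal (X r) = Ph (y - r)" if "0 \<le> r" "r \<le> V" for r
    unfolding X_def Xenn[OF \<rho>_nn \<rho>_int] using \<rho>_enn[OF that] by simp
  have XV: "X V = t" using X_enn[of V] V z X_nn[of V] t(1) by (simp add: V_def)
  have YsX: "Ys (X r) = y - r" if "0 \<le> r" "r \<le> V" for r
    using that V z by (intro Ys_eqI) (auto simp: X_enn V_def)
  have "(\<integral>\<^sup>+r. ennreal (\<rho> r) * ennreal (xs (X r)) \<partial>lborel) = (\<integral>\<^sup>+s. indicator {0..X V} s * ennreal (xs s) \<partial>lborel)"
    unfolding X_def by (rule cv_core[OF \<rho>_nn \<rho>_int \<rho>_supp V(1)]) measurable
  moreover have "(\<integral>\<^sup>+r. ennreal (\<rho> r) * ennreal (xs (X r)) \<partial>lborel) = (\<integral>\<^sup>+r. indicator {0..V} r \<partial>lborel)"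
  proof (rule nn_integral_cong_AE)
    show "AE r in lborel. ennreal (\<rho> r) * ennreal (xs (X r)) = indicator {0..V} r"
      using AE_lborel_singleton[of y]
    proof eventually_elim
      case (elim r)
      show ?case
      proof (cases "r \<in> {0..V}")
        case True
        then have "0 < y - r" using elim V by auto
        then have p: "0 < psi (y - r)" by (rule psi_pos)
        have "ennreal (\<rho> r) * ennreal (xs (X r)) = ennreal (1 / psi (y - r) * psi (y - r))"
          using True V p YsX[of r] by (simp add: \<rho>_def xs_def psie_def ennreal_mult[symmetric])
        also have "\<dots> = 1" using p by simp
        finally show ?thesis using True by simp
      qed (simp add: \<rho>_def)
    qed
  qed
  ultimately have "(\<integral>\<^sup>+s. indicator {0..t} s * ennreal (xs s) \<partial>lborel) = ennreal V"
    using V XV by simp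
  then show ?thesis by (simp add: V_def z_def mult.commute)
qed

lemma C_all:
  assumes t: "0 \<le> t"
  shows "(\<integral>\<^sup>+s. ennreal (xs s) * indicator {0..t} s \<partial>lborel) = ennreal (y - Ys t)"
proof (cases "ennreal t \<le> ta")
  case True then show ?thesis using C_int t by simp
next
  case False
  then have fin: "ta \<noteq> \<infinity>" by auto
  define \<tau> where "\<tau> = enn2real ta"
  have tau_eq: "ennreal \<tau> = ta" using fin by (simp add: \<tau>_def less_top)
  have tau0: "0 \<le> \<tau>" by (simp add: \<tau>_def)
  have Ystau: "Ys \<tau> = 0" using Ys_eqI[of 0 \<tau>] y_nn tau_eq Ph0 by simp
  have Yst: "Ys t = 0" using Ys_big False by simp
  have "\<tau> < t" using False tau_eq by (metis ennreal_leI not_le)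
  have "(\<integral>\<^sup>+s. ennreal (xs s) * indicator {0..t} s \<partial>lborel) = (\<integral>\<^sup>+s. ennreal (xs s) * indicator {0..\<tau>} s \<partial>lborel)"
  proof (intro nn_integral_cong)
    fix s
    show "ennreal (xs s) * indicator {0..t} s = ennreal (xs s) * indicator {0..\<tau>} s"
    proof (cases "\<tau> < s")
      case True
      then have "ta < ennreal s" using tau_eq tau0 by (metis ennreal_less_iff)
      then have "xs s = 0" by (simp add: xs_def Ys_big psi0)
      then show ?thesis by simp
    next
      case False
      then show ?thesis using \<open>\<tau> < t\<close> by (auto simp: indicator_def)
    qed
  qed
  also have "\<dots> = ennreal (y - Ys \<tau>)" using C_int[OF tau0] tau_eq by simp
  finally show ?thesis using Ystau Yst by simp
qed

lemma xs_int: assumes "0 \<le> t" shows "set_integrable lborel {0..t} xs" "traj y xs t = Ys t"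
proof -
  have fin: "(\<integral>\<^sup>+s. ennreal (indicator {0..t} s *\<^sub>R xs s) \<partial>lborel) = ennreal (y - Ys t)"
  proof -
    have "(\<integral>\<^sup>+s. ennreal (indicator {0..t} s *\<^sub>R xs s) \<partial>lborel) = (\<integral>\<^sup>+s. ennreal (xs s) * indicator {0..t} s \<partial>lborel)"
      by (intro nn_integral_cong) (auto simp: indicator_def)
    then show ?thesis using C_all[OF assms] by simp
  qed
  have int: "integrable lborel (\<lambda>s. indicator {0..t} s *\<^sub>R xs s)"
    by (rule integrableI_nonneg) (use fin xs_nn in \<open>auto simp: indicator_def\<close>)
  then show "set_integrable lborel {0..t} xs" by (simp add: set_integrable_def)
  have "ennreal (LINT s:{0..t}|lborel. xs s) = ennreal (y - Ys t)"
    using nn_integral_eq_integral[OF int] fin xs_nn by (simp add: set_lebesgue_integral_def indicator_def)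
  moreover have "0 \<le> (LINT s:{0..t}|lborel. xs s)"
    unfolding set_lebesgue_integral_def by (intro integral_nonneg_AE) (auto simp: xs_nn)
  moreover have "0 \<le> y - Ys t" using Ys_range[of t] by simp
  ultimately have "(LINT s:{0..t}|lborel. xs s) = y - Ys t" by simp
  then show "traj y xs t = Ys t" by (simp add: traj_def)
qed


abbreviation "W \<equiv> (\<integral>\<^sup>+u\<in>{0..y}. ennreal (cc u) \<partial>lborel)"

lemma W_fin: "W < \<infinity>"
proof -
  have "W \<le> (\<integral>\<^sup>+u. ennreal (K y + A * F 1) * indicator {0..y} u \<partial>lborel)"
    by (intro nn_integral_mono) (auto simp: indicator_def intro!: ennreal_leI cc_bound)
  also have "\<dots> < \<infinity>" using y_nn by (simp add: nn_integral_cmult_indicator ennreal_mult_less_top)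
  finally show ?thesis .
qed

lemma cost_dec:
  assumes adm: "admissible m y \<eta>"
  shows "cost K A F y \<eta> = (\<integral>\<^sup>+t\<in>{0..}. ennreal (gg (\<eta> t) (traj y \<eta> t)) \<partial>lborel) + W"
proof -
  let ?Y = "traj y \<eta>"
  have nn: "\<And>t. 0 \<le> t \<Longrightarrow> 0 \<le> \<eta> t" and int: "\<And>t. 0 \<le> t \<Longrightarrow> set_integrable lborel {0..t} \<eta>"
    using adm by (auto simp: admissible_def)
  note af = adm_facts[OF adm]
  define \<eta>e where "\<eta>e t = \<eta> t * indicator {0..} t" for t
  have \<eta>e_meas[measurable]: "\<eta>e \<in> borel_measurable borel" unfolding \<eta>e_def[abs_def] by (rule meas_Ici[OF int])
  define Ye where "Ye t = ?Y (max 0 t)" for t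
  have Ye_meas[measurable]: "Ye \<in> borel_measurable borel"
    unfolding Ye_def by (rule antimono_measurable) (rule af(3), auto)
  define g1 where "g1 t = ennreal (Ke (Ye t) + A * \<eta>e t * Fe (\<eta>e t) - \<eta>e t * cce (Ye t)) * indicator {0..} t" for t
  define g2 where "g2 t = ennreal (\<eta>e t) * ennreal (cce (Ye t)) * indicator {0..} t" for t
  have g1_meas: "g1 \<in> borel_measurable borel" unfolding g1_def[abs_def] by measurable
  have g2_meas: "g2 \<in> borel_measurable borel" unfolding g2_def[abs_def] by measurable
  have g1_eq: "g1 t = ennreal (gg (\<eta> t) (?Y t)) * indicator {0..} t" for t
    using af(1)[of t] nn[of t]
    by (cases "0 \<le> t") (auto simp: g1_def \<eta>e_def Ye_def Ke_def cce_def Fe_def gg_def)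
  have g2_eq: "g2 t = ennreal (\<eta> t) * ennreal (cc (?Y t)) * indicator {0..} t" for t
    using af(1)[of t] by (cases "0 \<le> t") (auto simp: g2_def \<eta>e_def Ye_def cce_def)
  have split: "ennreal (K (?Y t) + A * \<eta> t * F (\<eta> t)) * indicator {0..} t = g1 t + g2 t" for t
  proof (cases "0 \<le> t")
    case True
    have a: "0 \<le> gg (\<eta> t) (?Y t)" using gg_nn af(1)[OF True] nn[OF True] by simp
    have b: "0 \<le> \<eta> t * cc (?Y t)" using cc_nn af(1)[OF True] nn[OF True] by simp
    have "K (?Y t) + A * \<eta> t * F (\<eta> t) = gg (\<eta> t) (?Y t) + \<eta> t * cc (?Y t)" by (simp add: gg_def)
    then have "ennreal (K (?Y t) + A * \<eta> t * F (\<eta> t)) = ennreal (gg (\<eta> t) (?Y t)) + ennreal (\<eta> t) * ennreal (cc (?Y t))"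
      using a b nn[OF True] cc_nn[OF af(1)[OF True]] by (simp add: ennreal_plus ennreal_mult)
    then show ?thesis using True by (simp add: g1_eq g2_eq)
  qed (simp add: g1_eq g2_eq)
  have "cost K A F y \<eta> = (\<integral>\<^sup>+t. g1 t + g2 t \<partial>lborel)"
    unfolding cost_def by (simp add: split)
  also have "\<dots> = integral\<^sup>N lborel g1 + integral\<^sup>N lborel g2"
    using g1_meas g2_meas by (intro nn_integral_add) simp_all
  also have "integral\<^sup>N lborel g2 = (\<integral>\<^sup>+r\<in>{0..}. ennreal (\<eta> r) * ennreal (cce (?Y r)) \<partial>lborel)"
    using af(1) by (intro nn_integral_cong) (auto simp: g2_eq cce_def indicator_def)
  also have "\<dots> = (\<integral>\<^sup>+u\<in>{0..y}. ennreal (cce u) \<partial>lborel)"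
    by (rule cv_infty[OF nn int af(1) af(2)]) (auto simp: cce_meas)
  also have "\<dots> = W" by (intro nn_integral_cong) (auto simp: cce_def indicator_def)
  also have "integral\<^sup>N lborel g1 = (\<integral>\<^sup>+t\<in>{0..}. ennreal (gg (\<eta> t) (?Y t)) \<partial>lborel)"
    by (intro nn_integral_cong) (simp add: g1_eq)
  finally show ?thesis .
qed


lemma xs_small: "\<And>\<delta>. 0 < \<delta> \<Longrightarrow> \<exists>T\<ge>0. traj y xs T < \<delta>"
  using Ys_small xs_int(2) by metis

lemma xs_pos: "0 \<le> T \<Longrightarrow> 0 \<le> traj y xs T"
  using xs_int(2)[of T] Ys_range[of T] by simp

lemma tail_fin:
  assumes p: "1 \<le> p" and b: "0 < b" and bK: "\<And>u. u \<in> {0..y} \<Longrightarrow> b * u ^ p \<le> K u"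
  shows "(\<integral>\<^sup>+t\<in>{0..}. ennreal (Ys t ^ p) \<partial>lborel) < \<infinity>"
proof -
  define f where "f u = ennreal (u ^ p / psie u)" for u
  have f_meas: "f \<in> borel_measurable borel" unfolding f_def[abs_def] by measurable
  have "(\<integral>\<^sup>+r\<in>{0..}. ennreal (xs r) * f (traj y xs r) \<partial>lborel) = (\<integral>\<^sup>+u\<in>{0..y}. f u \<partial>lborel)"
    by (rule cv_infty[OF xs_nn xs_int(1) xs_pos xs_small f_meas])
  moreover have "(\<integral>\<^sup>+r\<in>{0..}. ennreal (xs r) * f (traj y xs r) \<partial>lborel) = (\<integral>\<^sup>+t\<in>{0..}. ennreal (Ys t ^ p) \<partial>lborel)"
  proof (intro nn_integral_cong)
    fix t :: real
    show "ennreal (xs t) * f (traj y xs t) * indicator {0..} t = ennreal (Ys t ^ p) * indicator {0..} t"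
    proof (cases "0 \<le> t")
      case True
      have rng: "0 \<le> Ys t" using Ys_range[of t] by simp
      show ?thesis
      proof (cases "Ys t = 0")
        case True
        then show ?thesis using \<open>0 \<le> t\<close> p by (simp add: xs_int(2) f_def xs_def psi0 psie_def)
      next
        case False
        then have "0 < Ys t" using rng by simp
        then have ps: "0 < psi (Ys t)" by (rule psi_pos)
        have "ennreal (xs t) * f (traj y xs t) = ennreal (psi (Ys t) * (Ys t ^ p / psi (Ys t)))"
          using \<open>0 \<le> t\<close> rng ps by (simp add: xs_int(2) f_def xs_def psie_def ennreal_mult[symmetric])
        also have "\<dots> = ennreal (Ys t ^ p)" using ps by simp
        finally show ?thesis by simp
      qed
    qed simp
  qed
  moreover have "(\<integral>\<^sup>+u\<in>{0..y}. f u \<partial>lborel) \<le> (\<integral>\<^sup>+u. ennreal ((K y + A * F 1) / b) * indicator {0..y} u \<partial>lborel)"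
  proof (intro nn_integral_mono)
    fix u
    show "f u * indicator {0..y} u \<le> ennreal ((K y + A * F 1) / b) * indicator {0..y} u"
    proof (cases "u \<in> {0..y}")
      case True
      show ?thesis
      proof (cases "u = 0")
        case True
        have "0 < p" using p by simp
        then show ?thesis using True by (simp add: f_def zero_power)
      next
        case False
        then have up: "0 < u" using True by simp
        have ps: "0 < psi u" using psi_pos[OF up] .
        have "u ^ p / psi u \<le> (K u / b) / psi u"
          using bK[OF True] b ps by (intro divide_right_mono) (auto simp: field_simps)
        also have "\<dots> \<le> cc u / b"
          using ps b F_nonneg psi_nn A_pos by (auto simp: cc_def field_simps intro!: mult_nonneg_nonneg)
        also have "\<dots> \<le> (K y + A * F 1) / b"
          using cc_bound[of u] True b by (intro divide_right_mono) auto
        finally show ?thesis using True up by (simp add: f_def psie_def ennreal_leI)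
      qed
    qed simp
  qed
  moreover have "(\<integral>\<^sup>+u. ennreal ((K y + A * F 1) / b) * indicator {0..y} u \<partial>lborel) < \<infinity>"
    using y_nn by (simp add: nn_integral_cmult_indicator ennreal_mult_less_top)
  ultimately show ?thesis by simp
qed

lemma adm_xs: "admissible m y xs"
proof -
  have tr: "traj y xs t = Ys t" if "0 \<le> t" for t using xs_int(2)[OF that] .
  have int_p: "integrable lborel (\<lambda>t. indicator {0..} t *\<^sub>R (Ys t ^ p))" if p: "1 \<le> p" and b: "0 < b"
    and bK: "\<And>u. u \<in> {0..y} \<Longrightarrow> b * u ^ p \<le> K u" for p b
  proof (rule integrableI_nonneg)
    show "(\<lambda>t. indicator {0..} t *\<^sub>R (Ys t ^ p)) \<in> borel_measurable lborel"
      using Ys_meas by measurable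
    show "AE x in lborel. 0 \<le> indicator {0..} x *\<^sub>R (Ys x ^ p)"
      using Ys_range by (auto simp: indicator_def)
    have "(\<integral>\<^sup>+t. ennreal (indicator {0..} t *\<^sub>R (Ys t ^ p)) \<partial>lborel) = (\<integral>\<^sup>+t\<in>{0..}. ennreal (Ys t ^ p) \<partial>lborel)"
      by (intro nn_integral_cong) (auto simp: indicator_def)
    then show "(\<integral>\<^sup>+t. ennreal (indicator {0..} t *\<^sub>R (Ys t ^ p)) \<partial>lborel) < \<infinity>"
      using tail_fin[OF p b bK] by simp
  qed
  have part3: "if m \<noteq> 0 then set_integrable lborel {0..} (\<lambda>t. \<bar>traj y xs t\<bar>)
      else set_integrable lborel {0..} (\<lambda>t. (traj y xs t)\<^sup>2)"
  proof (cases "m \<noteq> 0")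
    case True
    obtain a where a: "0 < a" "\<And>u. u \<in> {0..y} \<Longrightarrow> a * u \<le> K u" using K_lin[OF True] by auto
    have "integrable lborel (\<lambda>t. indicator {0..} t *\<^sub>R (Ys t ^ 1))"
      by (rule int_p[of 1 a]) (use a in auto)
    moreover have "(\<lambda>t. indicator {0..} t *\<^sub>R (Ys t ^ 1)) = (\<lambda>t. indicator {0..} t *\<^sub>R \<bar>traj y xs t\<bar>)"
      using tr Ys_range by (auto simp: indicator_def)
    ultimately show ?thesis using True unfolding set_integrable_def by (metis (no_types))
  next
    case False
    obtain b where b: "0 < b" "\<And>u. u \<in> {0..y} \<Longrightarrow> b * u\<^sup>2 \<le> K u" using K_quad False by auto
    have "integrable lborel (\<lambda>t. indicator {0..} t *\<^sub>R (Ys t ^ 2))"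
      by (rule int_p[of 2 b]) (use b in auto)
    moreover have "(\<lambda>t. indicator {0..} t *\<^sub>R (Ys t ^ 2)) = (\<lambda>t. indicator {0..} t *\<^sub>R (traj y xs t)\<^sup>2)"
      using tr by (auto simp: indicator_def)
    ultimately show ?thesis using False unfolding set_integrable_def by (metis (no_types))
  qed
  show ?thesis unfolding admissible_def using xs_nn xs_int(1) part3 by auto
qed

lemma cost_xs: "cost K A F y xs = W"
proof -
  have "(\<integral>\<^sup>+t\<in>{0..}. ennreal (gg (xs t) (traj y xs t)) \<partial>lborel) = (\<integral>\<^sup>+(t::real). 0 \<partial>lborel)"
  proof (intro nn_integral_cong)
    fix t :: real
    show "ennreal (gg (xs t) (traj y xs t)) * indicator {0..} t = 0"
      using gg_psi[of "Ys t"] Ys_range[of t] xs_int(2)[of t] by (cases "0 \<le> t") (auto simp: xs_def)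
  qed
  then show ?thesis using cost_dec[OF adm_xs] by simp
qed


lemma gg_meas:
  assumes adm: "admissible m y \<eta>"
  shows "(\<lambda>t. ennreal (gg (\<eta> t) (traj y \<eta> t)) * indicator {0..} t) \<in> borel_measurable borel"
proof -
  let ?Y = "traj y \<eta>"
  have nn: "\<And>t. 0 \<le> t \<Longrightarrow> 0 \<le> \<eta> t" and int: "\<And>t. 0 \<le> t \<Longrightarrow> set_integrable lborel {0..t} \<eta>"
    using adm by (auto simp: admissible_def)
  note af = adm_facts[OF adm]
  define \<eta>e where "\<eta>e t = \<eta> t * indicator {0..} t" for t
  have \<eta>e_meas[measurable]: "\<eta>e \<in> borel_measurable borel" unfolding \<eta>e_def[abs_def] by (rule meas_Ici[OF int])
  define Ye where "Ye t = ?Y (max 0 t)" for t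
  have Ye_meas[measurable]: "Ye \<in> borel_measurable borel"
    unfolding Ye_def by (rule antimono_measurable) (rule af(3), auto)
  define g1 where "g1 t = ennreal (Ke (Ye t) + A * \<eta>e t * Fe (\<eta>e t) - \<eta>e t * cce (Ye t)) * indicator {0..} t" for t
  have g1_meas: "g1 \<in> borel_measurable borel" unfolding g1_def[abs_def] by measurable
  have g1_eq: "g1 t = ennreal (gg (\<eta> t) (?Y t)) * indicator {0..} t" for t
    using af(1)[of t] nn[of t]
    by (cases "0 \<le> t") (auto simp: g1_def \<eta>e_def Ye_def Ke_def cce_def Fe_def gg_def)
  show ?thesis using g1_meas by (simp add: g1_eq[abs_def])
qed

lemma unique:
  assumes adm: "admissible m y \<eta>" and c: "cost K A F y \<eta> = W"
  shows "\<forall>t\<ge>0. traj y \<eta> t = Ys t"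
proof -
  let ?Y = "traj y \<eta>"
  have nn: "\<And>t. 0 \<le> t \<Longrightarrow> 0 \<le> \<eta> t" and int: "\<And>t. 0 \<le> t \<Longrightarrow> set_integrable lborel {0..t} \<eta>"
    using adm by (auto simp: admissible_def)
  note af = adm_facts[OF adm]
  have "(\<integral>\<^sup>+t\<in>{0..}. ennreal (gg (\<eta> t) (?Y t)) \<partial>lborel) + W = 0 + W"
    using cost_dec[OF adm] c by simp
  then have I0: "(\<integral>\<^sup>+t\<in>{0..}. ennreal (gg (\<eta> t) (?Y t)) \<partial>lborel) = 0"
    using W_fin by (subst (asm) add.commute, subst (asm) (2) add.commute) (auto simp: ennreal_add_left_cancel)
  have "AE t in lborel. ennreal (gg (\<eta> t) (?Y t)) * indicator {0..} t = 0"
    using I0 gg_meas[OF adm] by (subst (asm) nn_integral_0_iff_AE) auto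
  then have AEeq: "AE r in lborel. 0 \<le> r \<longrightarrow> \<eta> r = psi (?Y r)"
  proof eventually_elim
    case (elim r)
    show ?case
    proof
      assume r: "0 \<le> r"
      then have "gg (\<eta> r) (?Y r) \<le> 0" using elim by (simp add: ennreal_eq_0_iff)
      then have "gg (\<eta> r) (?Y r) = 0" using gg_nn[OF af(1)[OF r] nn[OF r]] by simp
      then show "\<eta> r = psi (?Y r)" using gg_zero[OF af(1)[OF r] nn[OF r]] by simp
    qed
  qed
  show ?thesis
  proof (intro allI impI)
    fix t :: real assume t: "0 \<le> t"
    have Ytr: "?Y t \<in> {0..y}" using af(1)[OF t] traj_mono(2)[of t \<eta> t y] nn int t by auto
    have cv: "(\<integral>\<^sup>+r\<in>{0..t}. ennreal (\<eta> r) * ennreal (1 / psie (?Y r)) \<partial>lborel) = Ph (?Y t)"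
      using cv_traj[OF t _ int[OF t], of "\<lambda>u. ennreal (1 / psie u)" y] nn Ph_alt[of "?Y t"] af(1)[OF t] by auto
    have LHS: "(\<integral>\<^sup>+r\<in>{0..t}. ennreal (\<eta> r) * ennreal (1 / psie (?Y r)) \<partial>lborel)
        = (\<integral>\<^sup>+r. indicator {0..t} r * (if 0 < ?Y r then 1 else 0) \<partial>lborel)"
    proof (rule nn_integral_cong_AE)
      show "AE r in lborel. ennreal (\<eta> r) * ennreal (1 / psie (?Y r)) * indicator {0..t} r = indicator {0..t} r * (if 0 < ?Y r then 1 else 0)"
        using AEeq
      proof eventually_elim
        case (elim r)
        show ?case
        proof (cases "r \<in> {0..t}")
          case True
          then have r0: "0 \<le> r" by simp
          have e: "\<eta> r = psi (?Y r)" using elim r0 by simp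
          have Yr: "0 \<le> ?Y r" using af(1)[OF r0] .
          show ?thesis
          proof (cases "0 < ?Y r")
            case True
            then have ps: "0 < psi (?Y r)" by (rule psi_pos)
            have "ennreal (\<eta> r) * ennreal (1 / psie (?Y r)) = ennreal (psi (?Y r) * (1 / psi (?Y r)))"
              using e Yr ps by (simp add: psie_def ennreal_mult[symmetric])
            then show ?thesis using True ps \<open>r \<in> {0..t}\<close> by simp
          next
            case False
            then have "?Y r = 0" using Yr by simp
            then show ?thesis using e by (simp add: psi0 psie_def)
          qed
        qed simp
      qed
    qed
    show "?Y t = Ys t"
    proof (cases "0 < ?Y t")
      case True
      have "(\<integral>\<^sup>+r. indicator {0..t} r * (if 0 < ?Y r then 1 else 0) \<partial>lborel) = (\<integral>\<^sup>+r. indicator {0..t} r \<partial>lborel)"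
      proof (intro nn_integral_cong)
        fix r
        show "indicator {0..t} r * (if 0 < ?Y r then 1 else 0) = (indicator {0..t} r :: ennreal)"
        proof (cases "r \<in> {0..t}")
          case True
          then have "?Y t \<le> ?Y r" using af(3)[of r t] by auto
          then show ?thesis using \<open>0 < ?Y t\<close> True by simp
        qed simp
      qed
      then have "Ph (?Y t) = ennreal t" using cv LHS t by simp
      then show ?thesis using Ys_eqI[OF Ytr] by simp
    next
      case False
      then have Y0: "?Y t = 0" using af(1)[OF t] by simp
      have "Ph 0 \<le> ennreal t"
      proof -
        have "Ph 0 = (\<integral>\<^sup>+r. indicator {0..t} r * (if 0 < ?Y r then 1 else 0) \<partial>lborel)"
          using cv LHS Y0 by simp
        also have "\<dots> \<le> (\<integral>\<^sup>+r. indicator {0..t} r \<partial>lborel)"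
          by (intro nn_integral_mono) (auto simp: indicator_def)
        also have "\<dots> = ennreal t" using t by simp
        finally show ?thesis .
      qed
      then show ?thesis
      proof (cases "ta < ennreal t")
        case True
        then show ?thesis using Ys_big Y0 by simp
      next
        case False
        then have "Ph 0 = ennreal t" using \<open>Ph 0 \<le> ennreal t\<close> Ph0 by simp
        then show ?thesis using Ys_eqI[of 0 t] y_nn Y0 by simp
      qed
    qed
  qed
qed

lemma value_eq: "valueV m K A F y = W"
proof (rule antisym)
  show "valueV m K A F y \<le> W"
    unfolding valueV_def using adm_xs cost_xs by (metis (mono_tags, lifting) INF_lower mem_Collect_eq)
  show "W \<le> valueV m K A F y"
    unfolding valueV_def
  proof (rule INF_greatest)
    fix \<eta> assume "\<eta> \<in> {\<eta>. admissible m y \<eta>}"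
    then show "W \<le> cost K A F y \<eta>" using cost_dec by simp
  qed
qed

theorem main_loc:
  "let Y = Ys; \<xi> = (\<lambda>t. invG F (K (Y t) / A))
   in admissible m y \<xi> \<and> (\<forall>t\<ge>0. traj y \<xi> t = Y t) \<and> cost K A F y \<xi> = valueV m K A F y
      \<and> (\<forall>\<eta>. admissible m y \<eta> \<and> cost K A F y \<eta> = valueV m K A F y \<longrightarrow> (\<forall>t\<ge>0. traj y \<eta> t = Y t))
      \<and> valueV m K A F y = (\<integral>\<^sup>+u\<in>{0..y}. ennreal (K u / invG F (K u / A) + A * F (invG F (K u / A))) \<partial>lborel)"
proof -
  have xi: "(\<lambda>t. invG F (K (Ys t) / A)) = xs" by (simp add: fun_eq_iff xs_def psi_def)
  have Weq: "W = (\<integral>\<^sup>+u\<in>{0..y}. ennreal (K u / invG F (K u / A) + A * F (invG F (K u / A))) \<partial>lborel)"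
    by (simp add: cc_def psi_def)
  show ?thesis unfolding Let_def xi
    using adm_xs xs_int(2) cost_xs value_eq unique Weq by auto
qed

end


definition phi :: "real \<Rightarrow> real" where "phi w = exp w - 1 - w"

lemma phi_nn: "0 \<le> phi w"
  unfolding phi_def using exp_ge_add_one_self[of w] by linarith

lemma phi_taylor: "\<exists>t. \<bar>t\<bar> \<le> \<bar>w\<bar> \<and> phi w = exp t / 2 * w\<^sup>2"
proof -
  obtain t where t: "\<bar>t\<bar> \<le> \<bar>w\<bar>" "exp w = (\<Sum>m<2. (w ^ m) / fact m) + (exp t / fact 2) * w ^ 2"
    using Maclaurin_exp_le[of w 2] by blast
  have "(\<Sum>m<2. (w ^ m) / fact m) = 1 + w" by (simp add: numeral_2_eq_2)
  then show ?thesis using t by (intro exI[of _ t]) (simp add: phi_def)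
qed

lemma phi_upper: "phi w \<le> exp \<bar>w\<bar> / 2 * w\<^sup>2"
proof -
  obtain t where t: "\<bar>t\<bar> \<le> \<bar>w\<bar>" "phi w = exp t / 2 * w\<^sup>2" using phi_taylor by blast
  have "exp t \<le> exp \<bar>w\<bar>" using t(1) by simp
  then show ?thesis using t(2) by (simp add: mult_right_mono)
qed

lemma phi_lower: assumes "-M \<le> w" "0 \<le> M" shows "exp (-M) / 2 * w\<^sup>2 \<le> phi w"
proof (cases "0 \<le> w")
  case True
  have "exp (-M) \<le> 1" using assms(2) by simp
  then have "exp (-M) * w\<^sup>2 \<le> w\<^sup>2" by (intro mult_left_le_one_le) auto
  then have "exp (-M) / 2 * w\<^sup>2 \<le> w\<^sup>2 / 2" by simp
  also have "\<dots> \<le> phi w" using exp_lower_Taylor_quadratic[OF True] by (simp add: phi_def)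
  finally show ?thesis .
next
  case False
  obtain t where t: "\<bar>t\<bar> \<le> \<bar>w\<bar>" "phi w = exp t / 2 * w\<^sup>2" using phi_taylor by blast
  have "-M \<le> t" using t(1) assms False by auto
  then have "exp (-M) \<le> exp t" by simp
  then show ?thesis using t(2) by (simp add: mult_right_mono)
qed

lemma phi_scale: assumes "0 \<le> l" "l \<le> 1" shows "phi (l * w) \<le> phi w"
proof -
  have "exp ((1 - l) *\<^sub>R 0 + l *\<^sub>R w) \<le> (1 - l) * exp 0 + l * exp w"
    using convex_onD[OF exp_convex, of l 0 w] assms by simp
  then have "exp (l * w) \<le> (1 - l) + l * exp w" by simp
  then have "phi (l * w) \<le> l * phi w" by (simp add: phi_def algebra_simps)
  also have "\<dots> \<le> phi w" using assms phi_nn[of w] by (simp add: mult_left_le_one_le)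
  finally show ?thesis .
qed

lemma expm1_bound: fixes z :: real assumes "\<bar>z\<bar> \<le> 1" shows "\<bar>exp z - 1\<bar> \<le> 3 * \<bar>z\<bar>"
proof -
  obtain t where t: "\<bar>t\<bar> \<le> \<bar>z\<bar>" "exp z = (\<Sum>m<1. (z ^ m) / fact m) + (exp t / fact 1) * z ^ 1"
    using Maclaurin_exp_le[of z 1] by blast
  have "exp t \<le> exp 1" using t(1) assms by simp
  also have "\<dots> \<le> 3" using exp_le by simp
  finally have "exp t \<le> 3" .
  then show ?thesis using t(2) by (simp add: abs_mult mult_right_mono)
qed

locale Lset =
  fixes mu sig :: real and nu :: "real measure"
  assumes nu_density: "\<exists>g. g \<in> borel_measurable borel \<and> nu = density lborel g"
    and nu_levy: "integrable nu (\<lambda>z. min 1 (z\<^sup>2))"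
    and nu_expmom: "set_integrable nu {z. 1 \<le> \<bar>z\<bar>} (\<lambda>z. exp (2 * z))"
begin

lemma sets_nu[measurable_cong]: "sets nu = sets borel"
  using nu_density by auto

lemma space_nu[simp]: "space nu = UNIV"
  using sets_eq_imp_space_eq[OF sets_nu] by simp

lemma meas_nu: "f \<in> borel_measurable borel \<Longrightarrow> f \<in> borel_measurable nu"
  using measurable_cong_sets[OF sets_nu refl] by simp

lemma int_kappa: assumes x: "x \<le> 0"
  shows "integrable nu (\<lambda>z. exp (x * (exp z - 1)) - 1 - x * (exp z - 1))"
proof -
  define c where "c = - x"
  have c: "0 \<le> c" using x by (simp add: c_def)
  define C where "C = 9 * c\<^sup>2 * exp (3 * c) / 2 + exp c"
  define f where "f z = C * min 1 (z\<^sup>2) + c * (indicator {z. 1 \<le> \<bar>z\<bar>} z *\<^sub>R exp (2 * z))" for z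
  have f_int: "integrable nu f"
  proof -
    have i1: "integrable nu (\<lambda>z. C * min 1 (z\<^sup>2))" using nu_levy by simp
    have i2: "integrable nu (\<lambda>z. c * (indicator {z. 1 \<le> \<bar>z\<bar>} z *\<^sub>R exp (2 * z)))"
      using nu_expmom unfolding set_integrable_def by simp
    show ?thesis unfolding f_def[abs_def] using Bochner_Integration.integrable_add[OF i1 i2] by simp
  qed
  show ?thesis
  proof (rule Bochner_Integration.integrable_bound[OF f_int])
    show "(\<lambda>z. exp (x * (exp z - 1)) - 1 - x * (exp z - 1)) \<in> borel_measurable nu"
      by (rule meas_nu) measurable
    show "AE z in nu. norm (exp (x * (exp z - 1)) - 1 - x * (exp z - 1)) \<le> norm (f z)"
    proof (intro AE_I2)
      fix z :: real
      define w where "w = x * (exp z - 1)"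
      have g_eq: "exp (x * (exp z - 1)) - 1 - x * (exp z - 1) = phi w" by (simp add: phi_def w_def)
      have C0: "0 \<le> C" by (simp add: C_def)
      have f_nn: "0 \<le> f z" using C0 c by (simp add: f_def indicator_def)
      have "phi w \<le> f z"
      proof (cases "\<bar>z\<bar> < 1")
        case True
        have e: "\<bar>exp z - 1\<bar> \<le> 3 * \<bar>z\<bar>" using True by (intro expm1_bound) auto
        have "\<bar>w\<bar> = c * \<bar>exp z - 1\<bar>" using c by (simp add: w_def c_def abs_mult)
        then have wb: "\<bar>w\<bar> \<le> c * (3 * \<bar>z\<bar>)" using e c by (simp add: mult_left_mono)
        have "c * (3 * \<bar>z\<bar>) \<le> c * 3" using True c by (intro mult_left_mono) auto
        then have wb1: "\<bar>w\<bar> \<le> 3 * c" using wb by linarith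
        have "w\<^sup>2 \<le> (c * (3 * \<bar>z\<bar>))\<^sup>2" using wb by (metis abs_ge_zero power2_abs power_mono)
        then have w2: "w\<^sup>2 \<le> 9 * c\<^sup>2 * z\<^sup>2" by (simp add: power_mult_distrib power2_abs)
        have "phi w \<le> exp \<bar>w\<bar> / 2 * w\<^sup>2" by (rule phi_upper)
        also have "\<dots> \<le> exp (3 * c) / 2 * (9 * c\<^sup>2 * z\<^sup>2)"
          using wb1 w2 by (intro mult_mono divide_right_mono) auto
        also have "\<dots> \<le> C * z\<^sup>2" by (simp add: C_def algebra_simps)
        also have "\<dots> = C * min 1 (z\<^sup>2)"
        proof -
          have "z\<^sup>2 \<le> 1" using True by (simp add: abs_square_le_1)
          then show ?thesis by (simp add: min_def)
        qed
        also have "\<dots> \<le> f z" using True by (simp add: f_def indicator_def)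
        finally show ?thesis .
      next
        case False
        show ?thesis
        proof (cases "0 \<le> z")
          case True
          then have "1 \<le> z" using False by simp
          have w0: "w \<le> 0" using x True by (simp add: w_def mult_nonpos_nonneg)
          then have "exp w \<le> 1" by simp
          then have "phi w \<le> - w" by (simp add: phi_def)
          also have "\<dots> = c * (exp z - 1)" by (simp add: w_def c_def)
          also have "\<dots> \<le> c * exp (2 * z)"
          proof -
            have e2: "exp z \<le> exp (2 * z)" using True by simp
            show ?thesis using mult_left_mono[of "exp z - 1" "exp (2 * z)" c] c e2 by linarith
          qed
          also have "\<dots> \<le> f z" using False C0 by (simp add: f_def indicator_def)
          finally show ?thesis .
        next
          case False
          then have z1: "z \<le> -1" using \<open>\<not> \<bar>z\<bar> < 1\<close> by simp
          have "exp z \<le> 1" using False by simp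
          have "w \<le> c" using mult_nonpos_nonneg[of x "exp z"] x by (simp add: w_def c_def algebra_simps)
          have "0 \<le> w" using x \<open>exp z \<le> 1\<close> by (simp add: w_def mult_nonpos_nonpos)
          have "phi w \<le> exp w" using \<open>0 \<le> w\<close> by (simp add: phi_def)
          also have "\<dots> \<le> exp c" using \<open>w \<le> c\<close> by simp
          also have "\<dots> \<le> C" by (simp add: C_def)
          also have "\<dots> = C * min 1 (z\<^sup>2)"
          proof -
            have "1 \<le> \<bar>z\<bar>" using z1 by simp
            then have "1 \<le> z\<^sup>2" by (metis abs_le_square_iff abs_one one_power2)
            then show ?thesis by (simp add: min_def)
          qed
          also have "\<dots> \<le> f z" using c by (simp add: f_def indicator_def)
          finally show ?thesis .
        qed
      qed
      then show "norm (exp (x * (exp z - 1)) - 1 - x * (exp z - 1)) \<le> norm (f z)"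
        using phi_nn[of w] f_nn by (simp add: g_eq)
    qed
  qed
qed


abbreviation "mt \<equiv> mtilde mu sig nu"
definition II where "II x = (\<integral>z. phi (x * (exp z - 1)) \<partial>nu)"

lemma kappaA_alt: "kappaA mu sig nu a u = mt * (- a * u) + sig\<^sup>2 * (a * u)\<^sup>2 / 2 + II (- a * u)"
  by (simp add: kappaA_def kappahat_def II_def phi_def power2_eq_square)

lemma II_nn: "0 \<le> II x"
  unfolding II_def by (intro integral_nonneg_AE) (simp add: phi_nn)

lemma II0: "II 0 = 0" by (simp add: II_def phi_def)

lemma int_phi: "x \<le> 0 \<Longrightarrow> integrable nu (\<lambda>z. phi (x * (exp z - 1)))"
  using int_kappa by (simp add: phi_def)

lemma II_mono: assumes a: "0 < a" and uv: "0 \<le> u" "u \<le> v" shows "II (- a * u) \<le> II (- a * v)"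
proof (cases "v = 0")
  case True then show ?thesis using uv by simp
next
  case False
  then have vp: "0 < v" using uv by simp
  show ?thesis unfolding II_def
  proof (rule integral_mono)
    show "integrable nu (\<lambda>z. phi (- a * u * (exp z - 1)))" using a uv by (intro int_phi) simp
    show "integrable nu (\<lambda>z. phi (- a * v * (exp z - 1)))" using a vp by (intro int_phi) simp
    fix z
    have "phi ((u / v) * (- a * v * (exp z - 1))) \<le> phi (- a * v * (exp z - 1))"
      using uv vp by (intro phi_scale) auto
    moreover have "(u / v) * (- a * v * (exp z - 1)) = - a * u * (exp z - 1)" using vp by (simp add: field_simps)
    ultimately show "phi (- a * u * (exp z - 1)) \<le> phi (- a * v * (exp z - 1))" by simp
  qed
qed

lemma KA0: "kappaA mu sig nu a 0 = 0" by (simp add: kappaA_alt II0)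

lemma KA_mono: assumes mn: "mt \<le> 0" and a: "0 < a" and uv: "0 \<le> u" "u \<le> v"
  shows "kappaA mu sig nu a u \<le> kappaA mu sig nu a v"
proof -
  have 1: "mt * (- a * u) \<le> mt * (- a * v)" using mn a uv by (intro mult_left_mono_neg) auto
  have "(a * u)\<^sup>2 \<le> (a * v)\<^sup>2" using a uv by (intro power_mono) auto
  then have 2: "sig\<^sup>2 * (a * u)\<^sup>2 / 2 \<le> sig\<^sup>2 * (a * v)\<^sup>2 / 2" by (intro divide_right_mono mult_left_mono) auto
  show ?thesis unfolding kappaA_alt using 1 2 II_mono[OF a uv] by linarith
qed

lemma KA_lin: assumes mn: "mt < 0" and a: "0 < a" and u: "0 \<le> u"
  shows "(- mt * a) * u \<le> kappaA mu sig nu a u"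
  unfolding kappaA_alt using II_nn[of "- a * u"] by (simp add: algebra_simps)

lemma nu_nonzero:
  assumes nontrivial: "mu \<noteq> 0 \<or> sig \<noteq> 0 \<or> emeasure nu UNIV \<noteq> 0" and m0: "mt = 0" and s0: "sig = 0"
  shows "emeasure nu UNIV \<noteq> 0"
proof
  assume e: "emeasure nu UNIV = 0"
  have "AE z in nu. False" using AE_iff_measurable[of "space nu" nu "\<lambda>_. False"] e by simp
  then have "(\<integral>z. (exp z - 1 - z * indicator {-1<..<1} z) \<partial>nu) = 0"
    by (intro integral_eq_zero_AE) (auto elim: eventually_mono)
  then have "mu = 0" using m0 s0 by (simp add: mtilde_def)
  then show False using nontrivial s0 e by simp
qed

lemma J_int: "integrable nu (\<lambda>z. (exp z - 1)\<^sup>2 * indicator {..real n} z)"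
proof (rule Bochner_Integration.integrable_bound)
  show "integrable nu (\<lambda>z. (9 + exp (2 * real n)) * min 1 (z\<^sup>2))" using nu_levy by simp
  show "(\<lambda>z. (exp z - 1)\<^sup>2 * indicator {..real n} z) \<in> borel_measurable nu" by (rule meas_nu) measurable
  show "AE z in nu. norm ((exp z - 1)\<^sup>2 * indicator {..real n} z) \<le> norm ((9 + exp (2 * real n)) * min 1 (z\<^sup>2))"
  proof (intro AE_I2)
    fix z :: real
    have "(exp z - 1)\<^sup>2 * indicator {..real n} z \<le> (9 + exp (2 * real n)) * min 1 (z\<^sup>2)"
    proof (cases "z \<le> real n")
      case False then show ?thesis by (simp add: indicator_def)
    next
      case zn: True
      show ?thesis
      proof (cases "\<bar>z\<bar> < 1")
        case True
        have "\<bar>exp z - 1\<bar> \<le> 3 * \<bar>z\<bar>" using True by (intro expm1_bound) auto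
        then have "\<bar>exp z - 1\<bar>\<^sup>2 \<le> (3 * \<bar>z\<bar>)\<^sup>2" by (intro power_mono) auto
        then have "(exp z - 1)\<^sup>2 \<le> 9 * z\<^sup>2" by (simp add: power_mult_distrib)
        moreover have "z\<^sup>2 \<le> 1" using True by (simp add: abs_square_le_1)
        moreover have "0 \<le> z\<^sup>2 * exp (2 * real n)" by simp
        moreover have "(9 + exp (2 * real n)) * z\<^sup>2 = 9 * z\<^sup>2 + z\<^sup>2 * exp (2 * real n)" by (simp add: algebra_simps)
        ultimately have "(exp z - 1)\<^sup>2 \<le> (9 + exp (2 * real n)) * z\<^sup>2" by linarith
        then show ?thesis using zn \<open>z\<^sup>2 \<le> 1\<close> by (simp add: min_def indicator_def)
      next
        case False
        have z1: "1 \<le> z\<^sup>2" using False by (metis abs_le_square_iff abs_one not_less one_power2)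
        have "(exp z - 1)\<^sup>2 \<le> 1 + exp (2 * real n)"
        proof (cases "0 \<le> z")
          case True
          have "0 \<le> exp z - 1" using True by simp
          then have "(exp z - 1)\<^sup>2 \<le> (exp z)\<^sup>2" by (intro power_mono) auto
          also have "\<dots> = exp (2 * z)" by (simp add: exp_double[symmetric] power2_eq_square exp_add[symmetric])
          also have "\<dots> \<le> exp (2 * real n)" using zn by simp
          finally show ?thesis by simp
        next
          case False
          then have "0 < exp z" "exp z \<le> 1" by auto
          then have "\<bar>exp z - 1\<bar> \<le> 1" by simp
          then have "(exp z - 1)\<^sup>2 \<le> 1" by (simp add: abs_square_le_1)
          then show ?thesis using exp_gt_zero[of "2 * real n"] by linarith
        qed
        then show ?thesis using zn z1 by (simp add: min_def indicator_def)
      qed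
    qed
    then show "norm ((exp z - 1)\<^sup>2 * indicator {..real n} z) \<le> norm ((9 + exp (2 * real n)) * min 1 (z\<^sup>2))"
      by (simp add: indicator_def)
  qed
qed

lemma J_pos: assumes "emeasure nu UNIV \<noteq> 0"
  shows "\<exists>n::nat. 0 < (\<integral>z. (exp z - 1)\<^sup>2 * indicator {..real n} z \<partial>nu)"
proof (rule ccontr)
  assume "\<not> ?thesis"
  then have "(\<integral>z. (exp z - 1)\<^sup>2 * indicator {..real n} z \<partial>nu) = 0" for n :: nat
  proof -
    assume h: "\<not> (\<exists>n::nat. 0 < (\<integral>z. (exp z - 1)\<^sup>2 * indicator {..real n} z \<partial>nu))"
    have "0 \<le> (\<integral>z. (exp z - 1)\<^sup>2 * indicator {..real n} z \<partial>nu)"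
      by (intro integral_nonneg_AE) auto
    moreover have "\<not> 0 < (\<integral>z. (exp z - 1)\<^sup>2 * indicator {..real n} z \<partial>nu)" using h by blast
    ultimately show ?thesis by linarith
  qed
  then have "AE z in nu. (exp z - 1)\<^sup>2 * indicator {..real n} z = 0" for n :: nat
    using integral_nonneg_eq_0_iff_AE[OF J_int] by auto
  then have "AE z in nu. \<forall>n::nat. (exp z - 1)\<^sup>2 * indicator {..real n} z = 0"
    unfolding AE_all_countable by blast
  then have A1: "AE z in nu. z = 0"
  proof (rule eventually_mono)
    fix z :: real assume h: "\<forall>n::nat. (exp z - 1)\<^sup>2 * indicator {..real n} z = 0"
    obtain n :: nat where "z \<le> real n" using real_arch_simple by blast
    then have "(exp z - 1)\<^sup>2 = 0" using h[rule_format, of n] by (simp add: indicator_def)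
    then show "z = 0" by simp
  qed
  obtain g where g: "g \<in> borel_measurable borel" "nu = density lborel g" using nu_density by auto
  have A2: "AE z in nu. z \<noteq> 0"
    unfolding g(2) using g(1) AE_lborel_singleton[of 0] by (subst AE_density) (auto elim: eventually_mono)
  have "AE z in nu. False" using A1 A2 by eventually_elim simp
  then have "emeasure nu (space nu) = 0" using AE_iff_measurable[of "space nu" nu "\<lambda>_. False"] by simp
  then show False using assms by simp
qed

lemma KA_quad:
  assumes nontrivial: "mu \<noteq> 0 \<or> sig \<noteq> 0 \<or> emeasure nu UNIV \<noteq> 0" and m0: "mt = 0" and a: "0 < a" and Y: "0 \<le> Y"
  shows "\<exists>b>0. \<forall>u\<in>{0..Y}. b * u\<^sup>2 \<le> kappaA mu sig nu a u"
proof (cases "sig = 0")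
  case False
  show ?thesis
  proof (intro exI[of _ "sig\<^sup>2 * a\<^sup>2 / 2"] conjI ballI)
    show "0 < sig\<^sup>2 * a\<^sup>2 / 2" using False a by simp
    fix u assume "u \<in> {0..Y}"
    show "sig\<^sup>2 * a\<^sup>2 / 2 * u\<^sup>2 \<le> kappaA mu sig nu a u"
      unfolding kappaA_alt using m0 II_nn[of "- a * u"] by (simp add: power_mult_distrib)
  qed
next
  case True
  have ne: "emeasure nu UNIV \<noteq> 0" using nu_nonzero[OF nontrivial m0 True] .
  obtain n :: nat where Jn: "0 < (\<integral>z. (exp z - 1)\<^sup>2 * indicator {..real n} z \<partial>nu)" using J_pos[OF ne] by auto
  define J where "J = (\<integral>z. (exp z - 1)\<^sup>2 * indicator {..real n} z \<partial>nu)"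
  define M where "M = a * Y * exp (real n)"
  have M0: "0 \<le> M" using a Y by (simp add: M_def)
  define b where "b = exp (- M) / 2 * a\<^sup>2 * J"
  show ?thesis
  proof (intro exI[of _ b] conjI ballI)
    show "0 < b" using Jn a by (simp add: b_def J_def)
    fix u assume u: "u \<in> {0..Y}"
    have e1: "(\<integral>z. exp (- M) / 2 * (a * u)\<^sup>2 * ((exp z - 1)\<^sup>2 * indicator {..real n} z) \<partial>nu) = exp (- M) / 2 * (a * u)\<^sup>2 * J"
      unfolding J_def by (rule integral_mult_right_zero)
    have "b * u\<^sup>2 = (\<integral>z. exp (- M) / 2 * (a * u)\<^sup>2 * ((exp z - 1)\<^sup>2 * indicator {..real n} z) \<partial>nu)"
      unfolding e1 by (simp add: b_def power_mult_distrib algebra_simps)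
    also have "\<dots> \<le> II (- a * u)"
      unfolding II_def
    proof (rule integral_mono)
      show "integrable nu (\<lambda>z. exp (- M) / 2 * (a * u)\<^sup>2 * ((exp z - 1)\<^sup>2 * indicator {..real n} z))"
        using J_int by simp
      show "integrable nu (\<lambda>z. phi (- a * u * (exp z - 1)))" using a u by (intro int_phi) simp
      fix z
      show "exp (- M) / 2 * (a * u)\<^sup>2 * ((exp z - 1)\<^sup>2 * indicator {..real n} z) \<le> phi (- a * u * (exp z - 1))"
      proof (cases "z \<le> real n")
        case False then show ?thesis by (simp add: indicator_def phi_nn)
      next
        case True
        have "exp z - 1 \<le> exp (real n)" using True by (smt (verit) exp_le_cancel_iff)
        moreover have "0 \<le> a * u" "a * u \<le> a * Y" using a u by auto
        ultimately have "a * u * (exp z - 1) \<le> M"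
          unfolding M_def by (smt (verit) exp_gt_zero mult_left_mono mult_right_mono)
        then have "- M \<le> - a * u * (exp z - 1)" by simp
        then have "exp (- M) / 2 * (- a * u * (exp z - 1))\<^sup>2 \<le> phi (- a * u * (exp z - 1))"
          using phi_lower M0 by blast
        then show ?thesis using True by (simp add: indicator_def power_mult_distrib)
      qed
    qed
    also have "\<dots> = kappaA mu sig nu a u" unfolding kappaA_alt using m0 True by simp
    finally show "b * u\<^sup>2 \<le> kappaA mu sig nu a u" .
  qed
qed

end
theorem mainTheorem15:
  fixes mu sig :: real and nu :: "real measure"
    and stilde A y :: real and F :: "real \<Rightarrow> real"
  assumes nu_density: "\<exists>g. g \<in> borel_measurable borel \<and> nu = density lborel g"
    and nu_levy: "integrable nu (\<lambda>z. min 1 (z\<^sup>2))"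
    and nu_expmom: "set_integrable nu {z. 1 \<le> \<bar>z\<bar>} (\<lambda>z. exp (2 * z))"
    and nontrivial: "mu \<noteq> 0 \<or> sig \<noteq> 0 \<or> emeasure nu UNIV \<noteq> 0"
    and m_nonpos: "mtilde mu sig nu \<le> 0"
    and stilde_pos: "0 < stilde"
    and A_pos: "0 < A"
    and F_nonneg: "\<forall>x\<ge>0. 0 \<le> F x"
    and F_cont: "continuous_on {0..} F"
    and F_diff: "\<forall>x>0. F differentiable (at x)"
    and F'_cont: "continuous_on {0<..} (deriv F)"
    and F_zero: "F 0 = 0"
    and F_conv: "strictly_convex_on {0..} (\<lambda>x. x * F x)"
    and F_mono: "strict_mono_on {0<..} (\<lambda>x. x\<^sup>2 * deriv F x)"
    and F_lim: "filterlim (\<lambda>x. x\<^sup>2 * deriv F x) at_top at_top"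
    and y_nonneg: "0 \<le> y"
  shows
    "let m = mtilde mu sig nu;
         K = kappaA mu sig nu (A * stilde);
         G = invG F;
         Y = Ystar K A F y;
         \<xi> = (\<lambda>t. G (K (Y t) / A))
     in admissible m y \<xi>
        \<and> (\<forall>t\<ge>0. traj y \<xi> t = Y t)
        \<and> cost K A F y \<xi> = valueV m K A F y
        \<and> (\<forall>\<eta>. admissible m y \<eta> \<and> cost K A F y \<eta> = valueV m K A F y
               \<longrightarrow> (\<forall>t\<ge>0. traj y \<eta> t = Y t))
        \<and> valueV m K A F y =
            (\<integral>\<^sup>+ u\<in>{0..y}. ennreal (K u / G (K u / A) + A * F (G (K u / A))) \<partial>lborel)"
proof -
  interpret L: Lset mu sig nu using nu_density nu_levy nu_expmom by unfold_locales
  define a where "a = A * stilde"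
  have a: "0 < a" using A_pos stilde_pos by (simp add: a_def)
  let ?K = "kappaA mu sig nu (A * stilde)"
  let ?m = "mtilde mu sig nu"
  have Kpos: "0 < ?K u" if u: "0 < u" for u
  proof (cases "?m < 0")
    case True
    have "(- ?m * a) * u \<le> ?K u" using L.KA_lin[OF True a, of u] u by (simp add: a_def)
    moreover have "0 < (- ?m * a) * u" using True a u by (intro mult_pos_pos) auto
    ultimately show ?thesis by linarith
  next
    case False
    then have m0: "?m = 0" using m_nonpos by simp
    obtain b where b: "0 < b" "\<And>v. v \<in> {0..u} \<Longrightarrow> b * v\<^sup>2 \<le> ?K v"
      using L.KA_quad[OF nontrivial m0, of "A * stilde" u] a u by (auto simp: a_def)
    have "b * u\<^sup>2 \<le> ?K u" using b(2)[of u] u by simp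
    moreover have "0 < b * u\<^sup>2" using b(1) u by simp
    ultimately show ?thesis by linarith
  qed
  interpret Kset F ?K A y ?m
  proof unfold_locales
    show "?K 0 = 0" by (rule L.KA0)
    show "\<And>u. 0 < u \<Longrightarrow> 0 < ?K u" by (rule Kpos)
    show "\<And>u v. 0 \<le> u \<Longrightarrow> u \<le> v \<Longrightarrow> ?K u \<le> ?K v"
      using L.KA_mono[OF m_nonpos] a by (simp add: a_def)
    show "?m \<noteq> 0 \<Longrightarrow> \<exists>a>0. \<forall>u\<in>{0..y}. a * u \<le> ?K u"
    proof -
      assume "?m \<noteq> 0"
      then have mn: "?m < 0" using m_nonpos by simp
      have pos: "0 < - ?m * a" using mn a by (intro mult_pos_pos) auto
      show ?thesis
        using L.KA_lin[OF mn, of "A * stilde"] a pos by (intro exI[of _ "- ?m * a"]) (auto simp: a_def)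
    qed
    show "?m = 0 \<Longrightarrow> \<exists>b>0. \<forall>u\<in>{0..y}. b * u\<^sup>2 \<le> ?K u"
      using L.KA_quad[OF nontrivial _ _ y_nonneg] a by (simp add: a_def)
  qed (use assms in auto)
  show ?thesis using main_loc by simp
qed


end
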